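(* Let $k\ge 2$ and $\ell\ge 0$ be constants. There is a deterministic $\mathsf{Online}$-$\mathsf{LOCAL}$ algorithm with locality $O(\log n)$ that properly colors every $n$-node connected graph in $\mathcal{L}_{k,\ell}$ using colors from $\{1,\dots,k+1\}$.
   Context: A graph is $k$-partite if it admits a proper coloring with $k$ colors. For a graph $G=(V,E)$, $U\subseteq V$ and an integer $T\ge 0$, $\mathcal{B}(U,T)$ denotes the set of nodes at distance at most $T$ from some node of $U$, and $G[U]$ denotes the induced subgraph. Locally inferable unique colorings: let $G$ be a $k$-partite graph and $\ell\ge0$ an integer. For a connected subgraph $G'=(V',E')$ of $G$, let $\mathcal{C}^*(G',\ell)$ be the set of all proper $k$-colorings (colors $\{1,\dots,k\}$) of $G[\mathcal{B}(V',\ell)]$, and $\mathcal{C}(G',\ell)$ the set of restrictions to $V'$ of colorings in $\mathcal{C}^*(G',\ell)$. Two $k$-colorings $c,c'$ are identical up to a permutation if $c'=\phi\circ c$ for some permutation $\phi$ of $\{1,\dots,k\}$. $\mathcal{L}_{k,\ell}$ is the class of $k$-partite graphs $G$ such that for every connected subgraph $G'$ of $G$, all colorings in $\mathcal{C}(G',\ell)$ are identical up to a permutation. The $\mathsf{Online}$-$\mathsf{LOCAL}$ model: an algorithm with locality $T=T(n)$ is deterministic and knows $n$. The adversary chooses an $n$-node input graph $G=(V,E)$ from the input family, assigns distinct identifiers from $\{1,\dots,\mathrm{poly}(n)\}$ to its nodes, and chooses an ordering $\sigma=(v_1,\dots,v_n)$ of $V$. For $i=1,\dots,n$, when $v_i$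 is presented, the algorithm must irrevocably assign an output (here a color) to $v_i$ as a function of the sequence $(v_1,\dots,v_i)$ and the induced subgraph $G_i=G\big[\bigcup_{j\le i}\mathcal{B}(v_j,T)\big]$ (with identifiers); thus the algorithm has global memory of everything seen so far. The algorithm solves a coloring problem on an input family if for every choice of the adversary the final coloring is proper and uses only the allowed colors. The locality of a problem is the minimum locality of an algorithm solving it. *)

theory Defs
  imports Main "HOL-Library.Landau_Symbols"
begin

text \<open>Graphs: nodes are identified with their (distinct) identifiers, which are
natural numbers. A graph is a finite vertex set with a symmetric irreflexive
edge relation contained in V x V.\<close>

definition graph :: "nat set \<Rightarrow> (nat \<times> nat) set \<Rightarrow> bool" where
  "graph V E \<longleftrightarrow> finite V \<and> E \<subseteq> V \<times> V \<and> sym E \<and> (\<forall>v. (v, v) \<notin> E)"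

fun nball :: "(nat \<times> nat) set \<Rightarrow> nat set \<Rightarrow> nat \<Rightarrow> nat set" where
  "nball E U 0 = U"
| "nball E U (Suc t) = nball E U t \<union> {v. \<exists>u\<in>nball E U t. (u, v) \<in> E}"

definition induced_edges :: "(nat \<times> nat) set \<Rightarrow> nat set \<Rightarrow> (nat \<times> nat) set" where
  "induced_edges E W = E \<inter> (W \<times> W)"

definition proper_coloring :: "nat \<Rightarrow> nat set \<Rightarrow> (nat \<times> nat) set \<Rightarrow> (nat \<Rightarrow> nat) \<Rightarrow> bool" where
  "proper_coloring k W F c \<longleftrightarrow> (\<forall>v\<in>W. c v \<in> {1..k}) \<and> (\<forall>(u, v)\<in>F. c u \<noteq> c v)"

definition k_partite :: "nat \<Rightarrow> nat set \<Rightarrow> (nat \<times> nat) set \<Rightarrow> bool" where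
  "k_partite k V E \<longleftrightarrow> (\<exists>c. proper_coloring k V E c)"

definition connected_graph :: "nat set \<Rightarrow> (nat \<times> nat) set \<Rightarrow> bool" where
  "connected_graph V' E' \<longleftrightarrow> (\<forall>u\<in>V'. \<forall>v\<in>V'. (u, v) \<in> (E' \<union> E'\<inverse>)\<^sup>*)"

definition in_L :: "nat \<Rightarrow> nat \<Rightarrow> nat set \<Rightarrow> (nat \<times> nat) set \<Rightarrow> bool" where
  "in_L k l V E \<longleftrightarrow> k_partite k V E \<and>
     (\<forall>V' E'. V' \<subseteq> V \<and> E' \<subseteq> E \<inter> (V' \<times> V') \<and> connected_graph V' E' \<longrightarrow>
        (\<forall>c c'. proper_coloring k (nball E V' l) (induced_edges E (nball E V' l)) c \<and>
                proper_coloring k (nball E V' l) (induced_edges E (nball E V' l)) c' \<longrightarrow>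
           (\<exists>\<phi>. bij_betw \<phi> {1..k} {1..k} \<and> (\<forall>v\<in>V'. c' v = \<phi> (c v)))))"

text \<open>A deterministic Online-LOCAL algorithm: given n, the prefix (v_1,...,v_i) of the
ordering, and the induced subgraph G_i (vertex set and edges, with identifiers),
it outputs a color for v_i.\<close>
type_synonym online_alg = "nat \<Rightarrow> nat list \<Rightarrow> nat set \<Rightarrow> (nat \<times> nat) set \<Rightarrow> nat"

text \<open>Output assigned to the i-th presented node (0-based index), with locality T.\<close>
definition online_output :: "online_alg \<Rightarrow> nat \<Rightarrow> nat \<Rightarrow> (nat \<times> nat) set \<Rightarrow> nat list \<Rightarrow> nat \<Rightarrow> nat" where
  "online_output A n T E \<sigma> i =
     (let pre = take (Suc i) \<sigma>; W = nball E (set pre) T in A n pre W (induced_edges E W))"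

end

theory Submission
  imports Defs
begin


lemma nball_mono_r: "r \<le> r' \<Longrightarrow> nball E U r \<subseteq> nball E U r'"
proof (induction r' arbitrary: r)
  case 0 then show ?case by simp
next
  case (Suc r') then show ?case by (cases "r = Suc r'") (auto simp: le_Suc_eq)
qed

lemma nball_mono_U: "U \<subseteq> U' \<Longrightarrow> nball E U r \<subseteq> nball E U' r"
  by (induction r) auto

lemma nball_0_sub: "U \<subseteq> nball E U r"
  using nball_mono_r[of 0 r E U] by simp

lemma nball_step: "x \<in> nball E U r \<Longrightarrow> (x, y) \<in> E \<Longrightarrow> y \<in> nball E U (Suc r)"
  by auto

lemma nball_add: "nball E (nball E U a) b = nball E U (a + b)"
  by (induction b) auto

lemma nball_restrict:
  assumes "nball E U r \<subseteq> W"
  shows "nball (E \<inter> (W \<times> W)) U r = nball E U r"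
  using assms
proof (induction r)
  case 0 then show ?case by simp
next
  case (Suc r)
  have sub: "nball E U r \<subseteq> W" using Suc.prems nball_mono_r[of r "Suc r" E U] by auto
  have IH: "nball (E \<inter> (W \<times> W)) U r = nball E U r" using Suc.IH[OF sub] .
  show ?case
  proof
    show "nball (E \<inter> W \<times> W) U (Suc r) \<subseteq> nball E U (Suc r)" using IH by auto
    show "nball E U (Suc r) \<subseteq> nball (E \<inter> W \<times> W) U (Suc r)"
    proof
      fix y assume y: "y \<in> nball E U (Suc r)"
      show "y \<in> nball (E \<inter> W \<times> W) U (Suc r)"
      proof (cases "y \<in> nball E U r")
        case True then show ?thesis using IH by simp
      next
        case False
        then obtain u where u: "u \<in> nball E U r" "(u, y) \<in> E" using y by auto
        have "u \<in> W" "y \<in> W" using u(1) sub y Suc.prems by auto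
        then show ?thesis using u IH by auto
      qed
    qed
  qed
qed

lemma nball_Un: "nball E (A \<union> B) r = nball E A r \<union> nball E B r"
  by (induction r) auto

lemma nball_single_cases:
  "y \<in> nball E U r \<Longrightarrow> \<exists>u\<in>U. y \<in> nball E {u} r"
proof (induction r arbitrary: y)
  case 0 then show ?case by simp
next
  case (Suc r)
  then show ?case
  proof (cases "y \<in> nball E U r")
    case True
    then obtain u where "u \<in> U" "y \<in> nball E {u} r" using Suc.IH by blast
    then show ?thesis using nball_mono_r[of r "Suc r" E "{u}"] by auto
  next
    case False
    then obtain u where "u \<in> nball E U r" "(u, y) \<in> E" using Suc.prems by auto
    then show ?thesis using Suc.IH by fastforce
  qed
qed

definition dst :: "(nat \<times> nat) set \<Rightarrow> nat set \<Rightarrow> nat \<Rightarrow> nat" where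
  "dst E S x = (LEAST r. x \<in> nball E S r)"

lemma dst_le: "x \<in> nball E S r \<Longrightarrow> dst E S x \<le> r"
  unfolding dst_def by (rule Least_le)

lemma dst_in: "x \<in> nball E S r \<Longrightarrow> x \<in> nball E S (dst E S x)"
  unfolding dst_def by (rule LeastI)

lemma dst_notin: "x \<in> nball E S r \<Longrightarrow> x \<notin> nball E S r' \<Longrightarrow> r' < dst E S x"
  using dst_in[of x E S r] nball_mono_r[of "dst E S x" r' E S] by (meson not_le subsetD)

lemma dst_in_iff: "x \<in> nball E S r \<Longrightarrow> x \<in> nball E S r' \<longleftrightarrow> dst E S x \<le> r'"
  using dst_in[of x E S r] nball_mono_r[of "dst E S x" r' E S] dst_le[of x E S r'] by auto

lemma dst_adj:
  assumes "x \<in> nball E S r" "(x, y) \<in> E"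
  shows "y \<in> nball E S (Suc (dst E S x))" "dst E S y \<le> Suc (dst E S x)"
proof -
  show 1: "y \<in> nball E S (Suc (dst E S x))" using dst_in[OF assms(1)] assms(2) by auto
  show "dst E S y \<le> Suc (dst E S x)" using dst_le[OF 1] .
qed

lemma dst_mono_S:
  assumes "S \<subseteq> S'" "x \<in> nball E S r"
  shows "dst E S' x \<le> dst E S x"
  using dst_in[OF assms(2)] nball_mono_U[OF assms(1)] by (blast intro: dst_le)

lemma proper_coloring_mono:
  assumes "proper_coloring k W (induced_edges E W) c" "W' \<subseteq> W"
  shows "proper_coloring k W' (induced_edges E W') c"
  using assms unfolding proper_coloring_def induced_edges_def by auto

fun flog :: "nat \<Rightarrow> nat" where
  "flog n = (if n \<le> 1 then 0 else Suc (flog (n div 2)))"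

declare flog.simps[simp del]

lemma flog_mono: "a \<le> b \<Longrightarrow> flog a \<le> flog b"
proof (induction b arbitrary: a rule: less_induct)
  case (less b)
  show ?case
  proof (cases "a \<le> 1")
    case True then show ?thesis by (simp add: flog.simps)
  next
    case False
    then have "b > 1" using less.prems by simp
    then have "flog (a div 2) \<le> flog (b div 2)" using less.IH[of "b div 2" "a div 2"] less.prems by (simp add: div_le_mono)
    then show ?thesis using False \<open>b > 1\<close> by (subst (1 2) flog.simps) simp
  qed
qed

lemma flog_double: "1 \<le> a \<Longrightarrow> flog (2 * a) = Suc (flog a)"
  by (subst flog.simps) simp

lemma flog_lt: "1 \<le> a \<Longrightarrow> 2 * a \<le> b \<Longrightarrow> flog a < flog b"
  using flog_mono[of "2*a" b] flog_double[of a] by simp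

lemma flog_pow: "1 \<le> n \<Longrightarrow> 2 ^ flog n \<le> n"
proof (induction n rule: less_induct)
  case (less n)
  show ?case
  proof (cases "n \<le> 1")
    case True then show ?thesis using less.prems by (simp add: flog.simps)
  next
    case False
    then have "2 ^ flog (n div 2) \<le> n div 2" using less.IH[of "n div 2"] by simp
    then show ?thesis using False by (subst flog.simps) simp
  qed
qed


definition tstep :: "nat \<Rightarrow> (nat \<Rightarrow> nat) \<Rightarrow> nat \<Rightarrow> (nat \<Rightarrow> nat) \<Rightarrow> (nat \<Rightarrow> nat) \<times> (nat \<Rightarrow> nat) \<times> (nat \<Rightarrow> nat)" where
  "tstep k \<pi> j g = (let a = inv_into {1..k} \<pi> j; c = g a; b = (SOME b. b \<in> {1..k} \<and> g b = j) in
     if c = j then (g, g, g) else (g(b := k+1), g(b := k+1, a := j), g(b := c, a := j)))"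

primrec stage :: "nat \<Rightarrow> (nat \<Rightarrow> nat) \<Rightarrow> nat \<Rightarrow> (nat \<Rightarrow> nat)" where
  "stage k \<pi> 0 = id"
| "stage k \<pi> (Suc j) = snd (snd (tstep k \<pi> (Suc j) (stage k \<pi> j)))"

definition Gl :: "nat \<Rightarrow> (nat \<Rightarrow> nat) \<Rightarrow> nat \<Rightarrow> (nat \<Rightarrow> nat)" where
  "Gl k \<pi> s = (if 3*k \<le> s then stage k \<pi> k else
     (let j = s div 3; r = s mod 3 in
       if r = 0 then stage k \<pi> j else if r = 1 then fst (tstep k \<pi> (Suc j) (stage k \<pi> j))
       else fst (snd (tstep k \<pi> (Suc j) (stage k \<pi> j)))))"

lemma stage_inv:
  assumes pi: "bij_betw \<pi> {1..k} {1..k}" and "j \<le> k"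
  shows "inj_on (stage k \<pi> j) {1..k} \<and> stage k \<pi> j ` {1..k} \<subseteq> {1..k} \<and>
         (\<forall>i\<in>{1..j}. stage k \<pi> j (inv_into {1..k} \<pi> i) = i)"
  using assms(2)
proof (induction j)
  case 0 then show ?case by auto
next
  case (Suc j)
  let ?g = "stage k \<pi> j"
  from Suc have IH: "inj_on ?g {1..k}" "?g ` {1..k} \<subseteq> {1..k}"
      "\<forall>i\<in>{1..j}. ?g (inv_into {1..k} \<pi> i) = i" by auto
  define a where "a = inv_into {1..k} \<pi> (Suc j)"
  have a: "a \<in> {1..k}" unfolding a_def using pi Suc.prems
    by (metis atLeastAtMost_iff bij_betw_def inv_into_into le_add1 plus_1_eq_Suc image_eqI)
  have surj: "?g ` {1..k} = {1..k}"
    using IH(1,2) by (simp add: endo_inj_surj)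
  obtain b where b: "b \<in> {1..k}" "?g b = Suc j"
    using surj Suc.prems by (metis atLeastAtMost_iff imageE le_add1 plus_1_eq_Suc)
  define b' where "b' = (SOME b. b \<in> {1..k} \<and> ?g b = Suc j)"
  have b': "b' \<in> {1..k}" "?g b' = Suc j" unfolding b'_def using someI_ex[of "\<lambda>b. b \<in> {1..k} \<and> ?g b = Suc j"] b by auto
  have invpi: "\<And>i. i \<in> {1..k} \<Longrightarrow> inv_into {1..k} \<pi> i \<in> {1..k}" using pi
    by (metis bij_betw_def inv_into_into)
  have invinj: "\<And>i i'. i \<in> {1..k} \<Longrightarrow> i' \<in> {1..k} \<Longrightarrow> inv_into {1..k} \<pi> i = inv_into {1..k} \<pi> i' \<Longrightarrow> i = i'"
    using pi by (metis bij_betw_def f_inv_into_f)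
  show ?case
  proof (cases "?g a = Suc j")
    case True
    then have "stage k \<pi> (Suc j) = ?g" by (simp add: tstep_def a_def Let_def)
    then show ?thesis using IH True a_def by (auto simp: le_Suc_eq)
  next
    case False
    have ba: "b' \<noteq> a" using False b' by auto
    have st: "stage k \<pi> (Suc j) = ?g(b' := ?g a, a := Suc j)"
      using False unfolding stage.simps tstep_def Let_def a_def[symmetric] b'_def[symmetric] by simp
    have inj2: "inj_on (?g(b' := ?g a, a := Suc j)) {1..k}"
      unfolding inj_on_def
    proof (intro ballI impI)
      fix x y assume x: "x \<in> {1..k}" and y: "y \<in> {1..k}" and e: "(?g(b' := ?g a, a := Suc j)) x = (?g(b' := ?g a, a := Suc j)) y"
      show "x = y"
      proof -
        have gi: "\<And>u w. u \<in> {1..k} \<Longrightarrow> w \<in> {1..k} \<Longrightarrow> ?g u = ?g w \<Longrightarrow> u = w"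
          using IH(1) unfolding inj_on_def by blast
        have ga: "?g a \<noteq> Suc j" using False .
        have gx: "\<And>u. u \<in> {1..k} \<Longrightarrow> u \<noteq> b' \<Longrightarrow> ?g u \<noteq> Suc j" using gi b' by metis
        have gy: "\<And>u. u \<in> {1..k} \<Longrightarrow> u \<noteq> a \<Longrightarrow> ?g u \<noteq> ?g a" using gi a by metis
        show ?thesis
        proof (cases "x = a")
          case xa: True
          show ?thesis
          proof (cases "y = a")
            case True then show ?thesis using xa by simp
          next
            case False then show ?thesis using e xa ba y gx[of y] gy[of y] ga by (auto split: if_splits)
          qed
        next
          case xa: False
          show ?thesis
          proof (cases "y = a")
            case True then show ?thesis using e xa ba x gx[of x] gy[of x] ga by (auto split: if_splits)
          next
            case ya: False
            have e2: "(?g(b' := ?g a)) x = (?g(b' := ?g a)) y" using e xa ya by simp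
            show ?thesis
            proof (cases "x = b'")
              case True then show ?thesis using e2 gy[OF y] ya by (cases "y = b'") auto
            next
              case False then show ?thesis using e2 gy[OF x] xa gi[OF x y] by (cases "y = b'") auto
            qed
          qed
        qed
      qed
    qed
    have rng: "(?g(b' := ?g a, a := Suc j)) ` {1..k} \<subseteq> {1..k}"
      using IH(2) a Suc.prems by auto
    have fx: "\<forall>i\<in>{1..Suc j}. (?g(b' := ?g a, a := Suc j)) (inv_into {1..k} \<pi> i) = i"
    proof
      fix i assume i: "i \<in> {1..Suc j}"
      show "(?g(b' := ?g a, a := Suc j)) (inv_into {1..k} \<pi> i) = i"
      proof (cases "i = Suc j")
        case True then show ?thesis by (simp add: a_def)
      next
        case False
        then have i': "i \<in> {1..j}" using i by auto
        have ik: "i \<in> {1..k}" using i' Suc.prems by auto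
        have skj: "Suc j \<in> {1..k}" using Suc.prems by auto
        have ne: "inv_into {1..k} \<pi> i \<noteq> a" using invinj[OF ik skj] False a_def by auto
        have ne2: "inv_into {1..k} \<pi> i \<noteq> b'" using IH(3) i' b' by force
        show ?thesis using ne ne2 IH(3) i' by auto
      qed
    qed
    show ?thesis unfolding st using inj2 rng fx by blast
  qed
qed

definition good :: "nat \<Rightarrow> (nat \<Rightarrow> nat) \<Rightarrow> bool" where
  "good k f \<longleftrightarrow> inj_on f {1..k} \<and> f ` {1..k} \<subseteq> {1..k+1}"

definition mv :: "nat \<Rightarrow> (nat \<Rightarrow> nat) \<Rightarrow> (nat \<Rightarrow> nat) \<Rightarrow> bool" where
  "mv k f g \<longleftrightarrow> (\<forall>a\<in>{1..k}. g a = f a) \<or>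
     (\<exists>m\<in>{1..k}. \<exists>c. c \<notin> f ` {1..k} \<and> (\<forall>a\<in>{1..k}. g a = (if a = m then c else f a)))"

lemma mv_sep:
  assumes "good k f" "mv k f g" "a \<in> {1..k}" "a' \<in> {1..k}" "a \<noteq> a'"
  shows "f a \<noteq> g a'"
proof -
  have fi: "f a \<noteq> f a'" using assms(1,3,4,5) unfolding good_def inj_on_def by blast
  from assms(2) show ?thesis unfolding mv_def
  proof
    assume "\<forall>a\<in>{1..k}. g a = f a" then show ?thesis using fi assms(4) by simp
  next
    assume "\<exists>m\<in>{1..k}. \<exists>c. c \<notin> f ` {1..k} \<and> (\<forall>a\<in>{1..k}. g a = (if a = m then c else f a))"
    then obtain m c where "c \<notin> f ` {1..k}" "\<forall>a\<in>{1..k}. g a = (if a = m then c else f a)" by blast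
    then show ?thesis using fi assms(3,4) by (cases "a' = m") auto
  qed
qed

lemma mv_sep2:
  assumes "good k f" "mv k f g" "a \<in> {1..k}" "a' \<in> {1..k}" "a \<noteq> a'"
  shows "g a \<noteq> f a'"
  using mv_sep[OF assms(1,2) assms(4,3)] assms(5) by auto

lemma mv_good:
  assumes "good k f" "mv k f g" and rg: "g ` {1..k} \<subseteq> {1..k+1}"
  shows "good k g"
proof -
  from assms(2) show ?thesis unfolding mv_def
  proof
    assume h: "\<forall>a\<in>{1..k}. g a = f a"
    then have "inj_on g {1..k}" using assms(1) unfolding good_def by (metis inj_on_cong)
    then show ?thesis using rg unfolding good_def by blast
  next
    assume "\<exists>m\<in>{1..k}. \<exists>c. c \<notin> f ` {1..k} \<and> (\<forall>a\<in>{1..k}. g a = (if a = m then c else f a))"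
    then obtain m c where m: "m \<in> {1..k}" and c: "c \<notin> f ` {1..k}" and h: "\<forall>a\<in>{1..k}. g a = (if a = m then c else f a)" by blast
    have "inj_on g {1..k}" unfolding inj_on_def
    proof (intro ballI impI)
      fix x y assume x: "x \<in> {1..k}" and y: "y \<in> {1..k}" and e: "g x = g y"
      have fi: "\<And>u w. u \<in> {1..k} \<Longrightarrow> w \<in> {1..k} \<Longrightarrow> f u = f w \<Longrightarrow> u = w"
        using assms(1) unfolding good_def inj_on_def by blast
      have hx: "g x = (if x = m then c else f x)" using h x by blast
      have hy: "g y = (if y = m then c else f y)" using h y by blast
      have cx: "f x \<noteq> c" using c x by blast
      have cy: "f y \<noteq> c" using c y by blast
      show "x = y"
      proof (cases "x = m")
        case True then show ?thesis using e hx hy cy by (cases "y = m") auto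
      next
        case False then show ?thesis using e hx hy cx fi[OF x y] by (cases "y = m") auto
      qed
    qed
    then show ?thesis using rg unfolding good_def by blast
  qed
qed

lemma tstep_props:
  assumes pi: "bij_betw \<pi> {1..k} {1..k}" and j: "j \<in> {1..k}"
    and gi: "inj_on g {1..k}" and gr: "g ` {1..k} \<subseteq> {1..k}"
    and t: "tstep k \<pi> j g = (m1, m2, m3)"
  shows "mv k g m1 \<and> mv k m1 m2 \<and> mv k m2 m3 \<and> good k m1 \<and> good k m2 \<and> good k m3"
proof -
  have gg: "good k g" using gi gr unfolding good_def by auto
  define a where "a = inv_into {1..k} \<pi> j"
  have a: "a \<in> {1..k}" unfolding a_def using pi j by (metis bij_betw_def inv_into_into)
  have surj: "g ` {1..k} = {1..k}" using gi gr by (simp add: endo_inj_surj)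
  obtain b0 where b0: "b0 \<in> {1..k}" "g b0 = j" using surj j by (metis imageE)
  define b where "b = (SOME b. b \<in> {1..k} \<and> g b = j)"
  have b: "b \<in> {1..k}" "g b = j" unfolding b_def using someI_ex[of "\<lambda>b. b \<in> {1..k} \<and> g b = j"] b0 by auto
  show ?thesis
  proof (cases "g a = j")
    case True
    then have "m1 = g" "m2 = g" "m3 = g" using t unfolding tstep_def Let_def a_def[symmetric] by auto
    then show ?thesis using gg unfolding mv_def by auto
  next
    case False
    have ba: "b \<noteq> a" using False b by auto
    have e: "m1 = g(b := k+1)" "m2 = g(b := k+1, a := j)" "m3 = g(b := g a, a := j)"
      using t False unfolding tstep_def Let_def a_def[symmetric] b_def[symmetric] by auto
    have ginj: "\<And>u w. u \<in> {1..k} \<Longrightarrow> w \<in> {1..k} \<Longrightarrow> g u = g w \<Longrightarrow> u = w" using gi unfolding inj_on_def by blast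
    have mv1: "mv k g m1" unfolding mv_def
    proof (rule disjI2, intro bexI exI conjI)
      show "k + 1 \<notin> g ` {1..k}" using gr by auto
      show "\<forall>x\<in>{1..k}. m1 x = (if x = b then k+1 else g x)" using e by auto
    qed (rule b(1))
    have g1: "good k m1" by (rule mv_good[OF gg mv1]) (use gr e in auto)
    have jn: "j \<notin> m1 ` {1..k}"
    proof
      assume "j \<in> m1 ` {1..k}"
      then obtain u where u: "u \<in> {1..k}" "m1 u = j" by blast
      show False
      proof (cases "u = b")
        case True then show False using u e j by auto
      next
        case False then show False using u e ginj[OF u(1) b(1)] b by auto
      qed
    qed
    have mv2: "mv k m1 m2" unfolding mv_def
    proof (rule disjI2, intro bexI exI conjI)
      show "j \<notin> m1 ` {1..k}" by (rule jn)
      show "\<forall>x\<in>{1..k}. m2 x = (if x = a then j else m1 x)" using e by auto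
    qed (rule a)
    have g2: "good k m2" by (rule mv_good[OF g1 mv2]) (use gr e j in auto)
    have gaK: "g a \<in> {1..k}" using gr a by blast
    have gak: "g a \<le> k" using gaK by simp
    have cn: "g a \<notin> m2 ` {1..k}"
    proof
      assume "g a \<in> m2 ` {1..k}"
      then obtain u where u: "u \<in> {1..k}" "g a = m2 u" by auto
      show False
      proof (cases "u = a")
        case True then show False using u e False by auto
      next
        case ua: False
        show False
        proof (cases "u = b")
          case True then show False using u e ua gak by auto
        next
          case False then show False using u e ua ginj[OF u(1) a] by auto
        qed
      qed
    qed
    have mv3: "mv k m2 m3" unfolding mv_def
    proof (rule disjI2, intro bexI exI conjI)
      show "g a \<notin> m2 ` {1..k}" by (rule cn)
      show "\<forall>x\<in>{1..k}. m3 x = (if x = b then g a else m2 x)" using e ba by auto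
    qed (rule b(1))
    have g3: "good k m3" by (rule mv_good[OF g2 mv3]) (use gr e a j gaK in auto)
    show ?thesis using mv1 mv2 mv3 g1 g2 g3 by (intro conjI)
  qed
qed

lemma stage_good:
  assumes pi: "bij_betw \<pi> {1..k} {1..k}" and "j \<le> k"
  shows "good k (stage k \<pi> j)"
  using stage_inv[OF assms] unfolding good_def by auto

lemma Gl_props:
  assumes pi: "bij_betw \<pi> {1..k} {1..k}"
  shows "good k (Gl k \<pi> s) \<and> mv k (Gl k \<pi> s) (Gl k \<pi> (Suc s))"
proof (cases "3*k \<le> s")
  case True
  then have "Gl k \<pi> s = stage k \<pi> k" "Gl k \<pi> (Suc s) = stage k \<pi> k" unfolding Gl_def by auto
  then show ?thesis using stage_good[OF pi, of k] unfolding mv_def by auto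
next
  case False
  define j where "j = s div 3"
  define r where "r = s mod 3"
  have sj: "s = 3*j + r" unfolding j_def r_def by simp
  have r3: "r < 3" unfolding r_def by simp
  have jk: "j < k" using False sj by linarith
  obtain m1 m2 m3 where t: "tstep k \<pi> (Suc j) (stage k \<pi> j) = (m1, m2, m3)" by (metis prod_cases3)
  have si: "inj_on (stage k \<pi> j) {1..k}" "stage k \<pi> j ` {1..k} \<subseteq> {1..k}"
    using stage_inv[OF pi, of j] jk by auto
  have P: "mv k (stage k \<pi> j) m1 \<and> mv k m1 m2 \<and> mv k m2 m3 \<and> good k m1 \<and> good k m2 \<and> good k m3"
    by (rule tstep_props[OF pi _ si t]) (use jk in auto)
  have st: "stage k \<pi> (Suc j) = m3" using t by simp
  have gj: "good k (stage k \<pi> j)" using stage_good[OF pi, of j] jk by simp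
  have Gdef: "\<And>s'. s' < 3*k \<Longrightarrow> Gl k \<pi> s' = (let j = s' div 3; r = s' mod 3 in
       if r = 0 then stage k \<pi> j else if r = 1 then fst (tstep k \<pi> (Suc j) (stage k \<pi> j))
       else fst (snd (tstep k \<pi> (Suc j) (stage k \<pi> j))))" unfolding Gl_def by auto
  consider "r = 0" | "r = 1" | "r = 2" using r3 by linarith
  then show ?thesis
  proof cases
    case 1
    have a: "Gl k \<pi> s = stage k \<pi> j" using Gdef[of s] False 1 unfolding j_def r_def by auto
    have "Suc s < 3*k" "Suc s div 3 = j" "Suc s mod 3 = 1" using sj 1 jk by auto
    then have b: "Gl k \<pi> (Suc s) = m1" using Gdef[of "Suc s"] t by auto
    show ?thesis using a b P gj by simp
  next
    case 2
    have "s div 3 = j" "s mod 3 = 1" using sj 2 by presburger+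
    then have a: "Gl k \<pi> s = m1" using Gdef[of s] False t by auto
    have "Suc s < 3*k" using sj 2 jk by linarith
    moreover have "Suc s div 3 = j" "Suc s mod 3 = 2" using sj 2 by presburger+
    ultimately have b: "Gl k \<pi> (Suc s) = m2" using Gdef[of "Suc s"] t by auto
    show ?thesis using a b P by simp
  next
    case 3
    have "s div 3 = j" "s mod 3 = 2" using sj 3 by presburger+
    then have a: "Gl k \<pi> s = m2" using Gdef[of s] False t by auto
    have b: "Gl k \<pi> (Suc s) = m3"
    proof (cases "Suc j = k")
      case True
      then have "3*k \<le> Suc s" using sj 3 by simp
      then show ?thesis unfolding Gl_def using st True by simp
    next
      case False
      then have "Suc s < 3*k" "Suc s div 3 = Suc j" "Suc s mod 3 = 0" using sj 3 jk by auto
      then show ?thesis using Gdef[of "Suc s"] st by auto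
    qed
    show ?thesis using a b P by simp
  qed
qed

lemma Gl0:
  assumes "1 \<le> k" shows "Gl k \<pi> 0 a = a"
  using assms unfolding Gl_def by simp

lemma Glend:
  assumes pi: "bij_betw \<pi> {1..k} {1..k}" and "3*k \<le> s" and a: "a \<in> {1..k}"
  shows "Gl k \<pi> s a = \<pi> a"
proof -
  have "Gl k \<pi> s = stage k \<pi> k" using assms(2) unfolding Gl_def by simp
  moreover have pa: "\<pi> a \<in> {1..k}" using pi a by (metis bij_betw_apply)
  moreover have "inv_into {1..k} \<pi> (\<pi> a) = a" using pi a by (simp add: bij_betw_def inv_into_f_f)
  ultimately show ?thesis using stage_inv[OF pi, of k] by (metis order_refl)
qed

lemma Gl_sep:
  assumes pi: "bij_betw \<pi> {1..k} {1..k}" and a: "a \<in> {1..k}" "a' \<in> {1..k}" "a \<noteq> a'"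
    and s: "s' = s \<or> s' = Suc s \<or> s = Suc s'"
  shows "Gl k \<pi> s a \<noteq> Gl k \<pi> s' a'"
proof -
  have gs: "\<And>s. good k (Gl k \<pi> s)" using Gl_props[OF pi] by blast
  have ms: "\<And>s. mv k (Gl k \<pi> s) (Gl k \<pi> (Suc s))" using Gl_props[OF pi] by blast
  from s show ?thesis
  proof (elim disjE)
    assume "s' = s" then show ?thesis using gs[of s] a unfolding good_def inj_on_def by blast
  next
    assume "s' = Suc s" then show ?thesis using mv_sep[OF gs ms a] by simp
  next
    assume "s = Suc s'" then show ?thesis using mv_sep2[OF gs ms a] by simp
  qed
qed

lemma Gl_range:
  assumes pi: "bij_betw \<pi> {1..k} {1..k}" and a: "a \<in> {1..k}"
  shows "Gl k \<pi> s a \<in> {1..k+1}"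
  using Gl_props[OF pi, of s] a unfolding good_def by blast


locale alg =
  fixes k l R :: nat and E :: "(nat \<times> nat) set" and \<sigma> :: "nat list"
begin

definition pres :: "nat \<Rightarrow> nat set" where "pres t = set (take t \<sigma>)"
definition inner :: "nat \<Rightarrow> nat set" where "inner t = nball E (pres t) R"
definition comp :: "nat \<Rightarrow> nat \<Rightarrow> nat set" where
  "comp t x = {y \<in> inner t. (x, y) \<in> (E \<inter> (inner t \<times> inner t))\<^sup>*}"
definition vt :: "nat \<Rightarrow> nat" where "vt t = \<sigma> ! (t - 1)"
definition Kc :: "nat \<Rightarrow> nat set" where "Kc t = comp t (vt t)"
definition olds :: "nat \<Rightarrow> nat set set" where
  "olds t = (\<lambda>y. comp (t - 1) y) ` (Kc t \<inter> inner (t - 1))"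
definition cnt :: "nat \<Rightarrow> nat set \<Rightarrow> nat" where "cnt t C = card (C \<inter> pres t)"
definition win :: "nat \<Rightarrow> nat set" where
  "win t = (SOME C. C \<in> olds t \<and> (\<forall>C'\<in>olds t. cnt (t - 1) C' \<le> cnt (t - 1) C))"
definition losers :: "nat \<Rightarrow> nat set set" where "losers t = olds t - {win t}"

primrec base :: "nat \<Rightarrow> nat \<Rightarrow> nat" where
  "base 0 = (\<lambda>x. 0)"
| "base (Suc t) = (let Kt = Kc (Suc t); B = nball E Kt l;
      c = (SOME c. proper_coloring k B (induced_edges E B) c \<and>
             (olds (Suc t) \<noteq> {} \<longrightarrow> (\<forall>y\<in>win (Suc t). c y = base t y)))
    in (\<lambda>x. if x \<in> Kt then c x else base t x))"

definition Sd :: "nat \<Rightarrow> nat set \<Rightarrow> nat set" where "Sd t L = L \<inter> pres (t - 1)"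
definition dd :: "nat \<Rightarrow> nat set \<Rightarrow> nat" where
  "dd t L = (3 * k + 1) * (2 + flog (card (Sd t L)))"
definition zone :: "nat \<Rightarrow> nat set \<Rightarrow> nat set" where
  "zone t L = nball E (Sd t L) (dd t L - 1)"
definition pie :: "nat \<Rightarrow> nat set \<Rightarrow> nat \<Rightarrow> nat" where
  "pie t L = (SOME \<pi>. bij_betw \<pi> {1..k} {1..k} \<and> (\<forall>x\<in>L. base t x = \<pi> (base (t - 1) x)))"
definition zcol :: "nat \<Rightarrow> nat set \<Rightarrow> nat \<Rightarrow> nat" where
  "zcol t L x = Gl k (pie t L) (dst E (Sd t L) x + (3 * k + 1) - dd t L) (base (t - 1) x)"
definition isev :: "nat \<Rightarrow> nat set \<Rightarrow> bool" where "isev t L \<longleftrightarrow> 1 \<le> t \<and> L \<in> losers t"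
definition hasz :: "nat \<Rightarrow> nat \<Rightarrow> bool" where
  "hasz t x \<longleftrightarrow> (\<exists>t' L. t' \<le> t \<and> isev t' L \<and> x \<in> zone t' L)"
definition tz :: "nat \<Rightarrow> nat \<Rightarrow> nat" where
  "tz t x = (LEAST t'. \<exists>L. t' \<le> t \<and> isev t' L \<and> x \<in> zone t' L)"
definition Lz :: "nat \<Rightarrow> nat \<Rightarrow> nat set" where
  "Lz t x = (SOME L. isev (tz t x) L \<and> x \<in> zone (tz t x) L)"
definition Lab :: "nat \<Rightarrow> nat \<Rightarrow> nat" where
  "Lab t x = (if hasz t x then zcol (tz t x) (Lz t x) x else base t x)"
definition outc :: "nat \<Rightarrow> nat" where "outc t = Lab t (vt t)"

end

locale setting = alg +
  fixes V :: "nat set"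
  assumes gr: "graph V E" and inL: "in_L k l V E" and dist: "distinct \<sigma>" and setV: "set \<sigma> = V"
    and k1: "1 \<le> k" and Rbig: "(3 * k + 1) * (2 + flog (card V)) \<le> R"
begin

lemma finV: "finite V" using gr unfolding graph_def by auto
lemma EV: "E \<subseteq> V \<times> V" using gr unfolding graph_def by auto
lemma symE: "(x, y) \<in> E \<Longrightarrow> (y, x) \<in> E" using gr unfolding graph_def sym_def by auto
lemma irrE: "(x, x) \<notin> E" using gr unfolding graph_def by auto

lemma pres_mono: "t \<le> t' \<Longrightarrow> pres t \<subseteq> pres t'"
  unfolding pres_def by (metis set_take_subset_set_take)
lemma pres_V: "pres t \<subseteq> V" unfolding pres_def using setV by (metis set_take_subset)
lemma nball_V: "U \<subseteq> V \<Longrightarrow> nball E U r \<subseteq> V"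
  by (induction r) (use EV in auto)
lemma inner_V: "inner t \<subseteq> V" unfolding inner_def using nball_V pres_V by blast
lemma inner_mono: "t \<le> t' \<Longrightarrow> inner t \<subseteq> inner t'"
  unfolding inner_def using pres_mono nball_mono_U by blast
lemma pres_inner: "pres t \<subseteq> inner t" unfolding inner_def by (rule nball_0_sub)

end


context setting begin

abbreviation "Ri t \<equiv> E \<inter> (inner t \<times> inner t)"

lemma sym_Ri: "sym (Ri t)" unfolding sym_def using symE by auto

lemma comp_sub: "comp t x \<subseteq> inner t" unfolding comp_def by auto

lemma comp_refl: "x \<in> inner t \<Longrightarrow> x \<in> comp t x" unfolding comp_def by auto

lemma Ri_sym_rt: "(x, y) \<in> (Ri t)\<^sup>* \<Longrightarrow> (y, x) \<in> (Ri t)\<^sup>*"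
  using sym_rtrancl[OF sym_Ri[of t]] unfolding sym_def by blast

lemma comp_memI: "x \<in> inner t \<Longrightarrow> y \<in> comp t x \<Longrightarrow> x \<in> comp t y"
  unfolding comp_def using Ri_sym_rt by auto

lemma comp_eq: assumes "y \<in> comp t x" shows "comp t y = comp t x"
proof -
  have y: "y \<in> inner t" "(x, y) \<in> (Ri t)\<^sup>*" using assms unfolding comp_def by auto
  show ?thesis unfolding comp_def using y Ri_sym_rt[OF y(2)]
    by (auto intro: rtrancl_trans)
qed

lemma comp_inter: "z \<in> comp t x \<Longrightarrow> z \<in> comp t y \<Longrightarrow> comp t x = comp t y"
  using comp_eq by metis

lemma comp_adj: "y \<in> comp t x \<Longrightarrow> z \<in> inner t \<Longrightarrow> (y, z) \<in> E \<Longrightarrow> z \<in> comp t x"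
  unfolding comp_def by (auto intro: rtrancl_into_rtrancl)

lemma comp_mono: assumes "t \<le> t'" "y \<in> comp t x" shows "y \<in> comp t' x"
proof -
  have sub: "Ri t \<subseteq> Ri t'" using inner_mono[OF assms(1)] by auto
  show ?thesis using assms(2) rtrancl_mono[OF sub] inner_mono[OF assms(1)] unfolding comp_def by auto
qed

lemma comp_mono_set: "t \<le> t' \<Longrightarrow> x \<in> inner t \<Longrightarrow> comp t x \<subseteq> comp t' x"
  using comp_mono by blast

lemma ball_comp:
  assumes "S \<subseteq> pres t" "S \<subseteq> comp t x" "r \<le> R"
  shows "nball E S r \<subseteq> comp t x"
  using assms(3)
proof (induction r)
  case 0 then show ?case using assms(2) by simp
next
  case (Suc r)
  have IH: "nball E S r \<subseteq> comp t x" using Suc by simp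
  have inn: "nball E S (Suc r) \<subseteq> inner t" unfolding inner_def
    using nball_mono_U[OF assms(1)] nball_mono_r[OF Suc.prems] by blast
  show ?case
  proof
    fix z assume z: "z \<in> nball E S (Suc r)"
    show "z \<in> comp t x"
    proof (cases "z \<in> nball E S r")
      case True then show ?thesis using IH by auto
    next
      case False
      then obtain u where "u \<in> nball E S r" "(u, z) \<in> E" using z by auto
      then show ?thesis using comp_adj IH inn z by blast
    qed
  qed
qed

lemma comp_has_pres:
  assumes "y \<in> inner t" shows "\<exists>p\<in>pres t. comp t y = comp t p"
proof -
  obtain p where p: "p \<in> pres t" "y \<in> nball E {p} R"
    using assms nball_single_cases unfolding inner_def by blast
  have "p \<in> inner t" using p(1) pres_inner by auto
  then have "nball E {p} R \<subseteq> comp t p" using ball_comp[of "{p}" t p R] p(1) comp_refl by auto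
  then show ?thesis using p comp_eq by blast
qed

lemma comp_connected:
  assumes "x \<in> inner t"
  shows "connected_graph (comp t x) (E \<inter> (comp t x \<times> comp t x))"
proof -
  let ?C = "comp t x"
  have A: "\<And>u. (x, u) \<in> (Ri t)\<^sup>* \<Longrightarrow> (x, u) \<in> (E \<inter> (?C \<times> ?C))\<^sup>*"
  proof -
    fix u assume "(x, u) \<in> (Ri t)\<^sup>*"
    then show "(x, u) \<in> (E \<inter> (?C \<times> ?C))\<^sup>*"
    proof (induction rule: rtrancl_induct)
      case base then show ?case by simp
    next
      case (step y z)
      have "y \<in> ?C" "z \<in> ?C" using step.hyps assms unfolding comp_def
        by (auto intro: rtrancl_into_rtrancl)
      then show ?case using step by (auto intro: rtrancl_into_rtrancl)
    qed
  qed
  have symC: "sym (E \<inter> (?C \<times> ?C))" unfolding sym_def using symE by auto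
  show ?thesis unfolding connected_graph_def
  proof (intro ballI)
    fix u v assume u: "u \<in> ?C" and v: "v \<in> ?C"
    have xu: "(x, u) \<in> (E \<inter> (?C \<times> ?C))\<^sup>*" using A u unfolding comp_def by auto
    have xv: "(x, v) \<in> (E \<inter> (?C \<times> ?C))\<^sup>*" using A v unfolding comp_def by auto
    have ux: "(u, x) \<in> (E \<inter> (?C \<times> ?C))\<^sup>*" using xu sym_rtrancl[OF symC] unfolding sym_def by blast
    have "(u, v) \<in> (E \<inter> (?C \<times> ?C))\<^sup>*" using ux xv by (rule rtrancl_trans)
    then show "(u, v) \<in> ((E \<inter> (?C \<times> ?C)) \<union> (E \<inter> (?C \<times> ?C))\<inverse>)\<^sup>*"
      using rtrancl_mono[of "E \<inter> (?C \<times> ?C)" "(E \<inter> (?C \<times> ?C)) \<union> (E \<inter> (?C \<times> ?C))\<inverse>"] by blast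
  qed
qed

end


context setting begin

abbreviation "n \<equiv> length \<sigma>"

lemma n_card: "n = card V" using dist setV distinct_card by fastforce

lemma pres_step: assumes "1 \<le> t" "t \<le> n"
  shows "pres t = insert (vt t) (pres (t - 1))"
proof -
  have "take t \<sigma> = take (t - 1) \<sigma> @ [\<sigma> ! (t - 1)]"
    using assms take_Suc_conv_app_nth[of "t - 1" \<sigma>] by simp
  then show ?thesis unfolding pres_def vt_def by auto
qed

lemma vt_pres: "1 \<le> t \<Longrightarrow> t \<le> n \<Longrightarrow> vt t \<in> pres t" using pres_step by auto

lemma vt_notin: assumes "1 \<le> t" "t \<le> n" shows "vt t \<notin> pres (t - 1)"
proof
  assume "vt t \<in> pres (t - 1)"
  then obtain i where "i < t - 1" "\<sigma> ! i = \<sigma> ! (t - 1)" unfolding pres_def vt_def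
    by (auto simp: in_set_conv_nth)
  moreover have "t - 1 < n" using assms by simp
  ultimately show False using dist nth_eq_iff_index_eq[of \<sigma> i "t - 1"] by auto
qed

lemma inner_step: assumes "1 \<le> t" "t \<le> n"
  shows "inner t = inner (t - 1) \<union> nball E {vt t} R"
  unfolding inner_def using pres_step[OF assms] nball_Un[of E "{vt t}" "pres (t - 1)" R] by auto

lemma vt_inner: "1 \<le> t \<Longrightarrow> t \<le> n \<Longrightarrow> vt t \<in> inner t" using vt_pres pres_inner by auto

lemma ball_Kc: assumes "1 \<le> t" "t \<le> n" shows "nball E {vt t} R \<subseteq> Kc t"
  unfolding Kc_def using ball_comp[of "{vt t}" t "vt t" R] vt_pres[OF assms] comp_refl vt_inner[OF assms] by auto

lemma Kc_eq: "1 \<le> t \<Longrightarrow> t \<le> n \<Longrightarrow> y \<in> Kc t \<Longrightarrow> comp t y = Kc t"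
  unfolding Kc_def using comp_eq by blast

lemma untouched:
  assumes t: "1 \<le> t" "t \<le> n" and y: "y \<in> inner t" "y \<notin> Kc t"
  shows "y \<in> inner (t - 1) \<and> comp t y = comp (t - 1) y"
proof -
  have inn: "inner t \<subseteq> inner (t - 1) \<union> Kc t" using inner_step[OF t] ball_Kc[OF t] by auto
  have yi: "y \<in> inner (t - 1)" using inn y by auto
  have dis: "\<And>z. z \<in> comp t y \<Longrightarrow> z \<notin> Kc t"
    using y comp_eq comp_refl Kc_eq[OF t] by metis
  have "\<And>z. (y, z) \<in> (Ri t)\<^sup>* \<Longrightarrow> (y, z) \<in> (Ri (t - 1))\<^sup>*"
  proof -
    fix z assume "(y, z) \<in> (Ri t)\<^sup>*"
    then show "(y, z) \<in> (Ri (t - 1))\<^sup>*"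
    proof (induction rule: rtrancl_induct)
      case base then show ?case by simp
    next
      case (step a b)
      have "a \<in> comp t y" "b \<in> comp t y" using step.hyps y(1) unfolding comp_def
        by (auto intro: rtrancl_into_rtrancl)
      then have "a \<in> inner (t - 1)" "b \<in> inner (t - 1)" using dis inn comp_sub by blast+
      then show ?case using step by (auto intro: rtrancl_into_rtrancl)
    qed
  qed
  then have "comp t y \<subseteq> comp (t - 1) y"
  proof -
    assume h: "\<And>z. (y, z) \<in> (Ri t)\<^sup>* \<Longrightarrow> (y, z) \<in> (Ri (t - 1))\<^sup>*"
    show ?thesis
    proof
      fix z assume z: "z \<in> comp t y"
      have "z \<in> inner (t - 1)" using z dis inn comp_sub by blast
      moreover have "(y, z) \<in> (Ri (t - 1))\<^sup>*" using h z unfolding comp_def by auto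
      ultimately show "z \<in> comp (t - 1) y" unfolding comp_def by auto
    qed
  qed
  moreover have "comp (t - 1) y \<subseteq> comp t y" using comp_mono_set[of "t - 1" t y] yi by simp
  ultimately show ?thesis using yi by blast
qed

lemma olds_sub: assumes t: "1 \<le> t" "t \<le> n" and C: "C \<in> olds t"
  shows "C \<subseteq> Kc t" "\<exists>y\<in>Kc t \<inter> inner (t - 1). C = comp (t - 1) y"
proof -
  obtain y where y: "y \<in> Kc t" "y \<in> inner (t - 1)" "C = comp (t - 1) y" using C unfolding olds_def by auto
  have "comp (t - 1) y \<subseteq> comp t y" using comp_mono_set[of "t - 1" t y] y by simp
  then show "C \<subseteq> Kc t" using y Kc_eq[OF t] by auto
  show "\<exists>y\<in>Kc t \<inter> inner (t - 1). C = comp (t - 1) y" using y by auto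
qed

lemma olds_cover: "y \<in> Kc t \<Longrightarrow> y \<in> inner (t - 1) \<Longrightarrow> comp (t - 1) y \<in> olds t \<and> y \<in> comp (t - 1) y"
  unfolding olds_def using comp_refl by auto

lemma finite_inner: "finite (inner t)" using inner_V[of t] finV by (rule finite_subset)

lemma finite_olds: "finite (olds t)"
proof -
  have "finite (Kc t \<inter> inner (t - 1))" using finite_inner by auto
  then show ?thesis unfolding olds_def by auto
qed

lemma win_prop: assumes "olds t \<noteq> {}"
  shows "win t \<in> olds t \<and> (\<forall>C'\<in>olds t. cnt (t - 1) C' \<le> cnt (t - 1) (win t))"
proof -
  let ?f = "cnt (t - 1)"
  have fin: "finite (?f ` olds t)" "?f ` olds t \<noteq> {}" using finite_olds[of t] assms by auto
  obtain C where C1: "C \<in> olds t" "?f C = Max (?f ` olds t)" using Max_in[OF fin] by auto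
  have C: "C \<in> olds t" "\<forall>C'\<in>olds t. cnt (t - 1) C' \<le> cnt (t - 1) C"
    using C1 Max_ge[OF fin(1)] by auto
  show ?thesis unfolding win_def by (rule someI[of _ C]) (use C in auto)
qed

lemma losers_olds: "L \<in> losers t \<Longrightarrow> L \<in> olds t \<and> L \<noteq> win t" unfolding losers_def by auto

lemma olds_comp_form: "C \<in> olds t \<Longrightarrow> \<exists>y. y \<in> inner (t - 1) \<and> C = comp (t - 1) y"
  unfolding olds_def by auto

end


context setting begin

definition cs :: "nat \<Rightarrow> nat \<Rightarrow> nat" where
  "cs t = (SOME c. proper_coloring k (nball E (Kc t) l) (induced_edges E (nball E (Kc t) l)) c \<and>
             (olds t \<noteq> {} \<longrightarrow> (\<forall>y\<in>win t. c y = base (t - 1) y)))"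

lemma base_Suc: "base (Suc t) x = (if x \<in> Kc (Suc t) then cs (Suc t) x else base t x)"
  unfolding cs_def by (simp add: Let_def)

abbreviation "PC W c \<equiv> proper_coloring k W (induced_edges E W) c"

lemma chi_ex: "\<exists>\<chi>. proper_coloring k V E \<chi>"
  using inL unfolding in_L_def k_partite_def by auto

definition chi where "chi = (SOME \<chi>. proper_coloring k V E \<chi>)"

lemma chi: "proper_coloring k V E chi" unfolding chi_def using chi_ex someI_ex by metis

lemma perm_chi:
  assumes phi: "bij_betw \<phi> {1..k} {1..k}" and W: "W \<subseteq> V"
  shows "PC W (\<phi> \<circ> chi)"
proof -
  have r: "\<And>v. v \<in> V \<Longrightarrow> chi v \<in> {1..k}" using chi unfolding proper_coloring_def by auto
  have e: "\<And>u v. (u, v) \<in> E \<Longrightarrow> chi u \<noteq> chi v" using chi unfolding proper_coloring_def by auto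
  have inj: "inj_on \<phi> {1..k}" using phi bij_betw_def by blast
  have A: "\<forall>v\<in>W. (\<phi> \<circ> chi) v \<in> {1..k}"
  proof
    fix v assume "v \<in> W"
    then have "chi v \<in> {1..k}" using W r by blast
    then show "(\<phi> \<circ> chi) v \<in> {1..k}" using bij_betw_apply[OF phi] by simp
  qed
  have B: "\<forall>(u, v)\<in>induced_edges E W. (\<phi> \<circ> chi) u \<noteq> (\<phi> \<circ> chi) v"
  proof
    fix p assume p: "p \<in> induced_edges E W"
    obtain u v where puv: "p = (u, v)" by (cases p)
    have uvE: "(u, v) \<in> E" "u \<in> W" "v \<in> W" using p puv unfolding induced_edges_def by auto
    have cu: "chi u \<in> {1..k}" using uvE(2) W r by blast
    have cv: "chi v \<in> {1..k}" using uvE(3) W r by blast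
    have ne: "chi u \<noteq> chi v" using e[OF uvE(1)] .
    have "\<phi> (chi u) \<noteq> \<phi> (chi v)" using inj cu cv ne unfolding inj_on_def by blast
    then show "case p of (u, v) \<Rightarrow> (\<phi> \<circ> chi) u \<noteq> (\<phi> \<circ> chi) v" using puv by simp
  qed
  show ?thesis unfolding proper_coloring_def using A B by (intro conjI)
qed

lemma nball_empty: "nball E {} r = {}" by (induction r) auto

lemma comp_V: "comp t x \<subseteq> V" using comp_sub inner_V by blast

lemma inL_app:
  assumes x: "x \<in> inner t" and c: "PC (nball E (comp t x) l) c" and c': "PC (nball E (comp t x) l) c'"
  shows "\<exists>\<phi>. bij_betw \<phi> {1..k} {1..k} \<and> (\<forall>v\<in>comp t x. c' v = \<phi> (c v))"
proof -
  have "comp t x \<subseteq> V" "E \<inter> (comp t x \<times> comp t x) \<subseteq> E \<inter> (comp t x \<times> comp t x)"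
       "connected_graph (comp t x) (E \<inter> (comp t x \<times> comp t x))"
    using comp_V comp_connected[OF x] by auto
  then show ?thesis using inL c c' unfolding in_L_def by blast
qed

lemma nbcomp_V: "nball E (comp t x) l \<subseteq> V" by (rule nball_V) (rule comp_V)
lemma nbKc_V: "nball E (Kc t) l \<subseteq> V" unfolding Kc_def by (rule nbcomp_V)

lemma cs_ex:
  assumes t: "Suc t \<le> n"
    and IH: "\<And>x. x \<in> inner t \<Longrightarrow> \<exists>c. PC (nball E (comp t x) l) c \<and> (\<forall>y\<in>comp t x. c y = base t y)"
  shows "\<exists>c. PC (nball E (Kc (Suc t)) l) c \<and> (olds (Suc t) \<noteq> {} \<longrightarrow> (\<forall>y\<in>win (Suc t). c y = base t y))"
proof (cases "olds (Suc t) = {}")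
  case True
  have "bij_betw id {1..k} {1..k}" by simp
  then have "PC (nball E (Kc (Suc t)) l) (id \<circ> chi)" using perm_chi nbKc_V by blast
  then show ?thesis using True by blast
next
  case False
  have w: "win (Suc t) \<in> olds (Suc t)" using win_prop[OF False] by blast
  obtain y where y: "y \<in> inner t" "win (Suc t) = comp t y" using olds_comp_form[OF w] by auto
  obtain c0 where c0: "PC (nball E (comp t y) l) c0" "\<forall>z\<in>comp t y. c0 z = base t z" using IH[OF y(1)] by blast
  have "bij_betw id {1..k} {1..k}" by simp
  then have pc: "PC (nball E (comp t y) l) (id \<circ> chi)" using perm_chi nbcomp_V by blast
  obtain \<phi> where \<phi>: "bij_betw \<phi> {1..k} {1..k}" "\<forall>v\<in>comp t y. c0 v = \<phi> ((id \<circ> chi) v)"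
    using inL_app[OF y(1) pc c0(1)] by blast
  have "PC (nball E (Kc (Suc t)) l) (\<phi> \<circ> chi)" using perm_chi[OF \<phi>(1) nbKc_V] .
  moreover have "\<forall>z\<in>win (Suc t). (\<phi> \<circ> chi) z = base t z" using \<phi>(2) c0(2) y(2) by simp
  ultimately show ?thesis by blast
qed

lemma base_inv:
  "t \<le> n \<Longrightarrow> x \<in> inner t \<Longrightarrow> \<exists>c. PC (nball E (comp t x) l) c \<and> (\<forall>y\<in>comp t x. c y = base t y)"
proof (induction t arbitrary: x)
  case 0
  have "inner 0 = {}" unfolding inner_def pres_def using nball_empty by simp
  then show ?case using 0 by simp
next
  case (Suc t)
  have t: "1 \<le> Suc t" "Suc t \<le> n" using Suc.prems by auto
  have IH: "\<And>x. x \<in> inner t \<Longrightarrow> \<exists>c. PC (nball E (comp t x) l) c \<and> (\<forall>y\<in>comp t x. c y = base t y)"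
    using Suc by simp
  have csp: "PC (nball E (Kc (Suc t)) l) (cs (Suc t)) \<and> (olds (Suc t) \<noteq> {} \<longrightarrow> (\<forall>y\<in>win (Suc t). cs (Suc t) y = base t y))"
    unfolding cs_def using someI_ex[OF cs_ex[OF t(2) IH]] by simp
  show ?case
  proof (cases "x \<in> Kc (Suc t)")
    case True
    have e: "comp (Suc t) x = Kc (Suc t)" using Kc_eq[OF t True] .
    have "\<forall>y\<in>Kc (Suc t). cs (Suc t) y = base (Suc t) y" using base_Suc by simp
    then show ?thesis using csp e by auto
  next
    case False
    have u: "x \<in> inner t" "comp (Suc t) x = comp t x" using untouched[OF t Suc.prems(2) False] by auto
    have nk: "\<And>y. y \<in> comp t x \<Longrightarrow> y \<notin> Kc (Suc t)"
    proof
      fix y assume y: "y \<in> comp t x" "y \<in> Kc (Suc t)"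
      have "y \<in> comp (Suc t) x" using y(1) u(2) by simp
      then have "comp (Suc t) x = comp (Suc t) y" using comp_eq by metis
      also have "\<dots> = Kc (Suc t)" using Kc_eq[OF t y(2)] .
      finally show False using False comp_refl Suc.prems(2) by auto
    qed
    obtain c where c: "PC (nball E (comp t x) l) c" "\<forall>y\<in>comp t x. c y = base t y" using IH[OF u(1)] by blast
    have "\<forall>y\<in>comp t x. base (Suc t) y = base t y" using nk base_Suc by simp
    then show ?thesis using c u by auto
  qed
qed

lemma cs_prop: assumes "1 \<le> t" "t \<le> n"
  shows "PC (nball E (Kc t) l) (cs t) \<and> (olds t \<noteq> {} \<longrightarrow> (\<forall>y\<in>win t. cs t y = base (t - 1) y))"
proof -
  obtain t' where t': "t = Suc t'" using assms by (cases t) auto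
  have IH: "\<And>x. x \<in> inner t' \<Longrightarrow> \<exists>c. PC (nball E (comp t' x) l) c \<and> (\<forall>y\<in>comp t' x. c y = base t' y)"
    using base_inv assms t' by simp
  show ?thesis unfolding cs_def using someI_ex[OF cs_ex[OF _ IH]] assms t' by simp
qed

end


context setting begin

lemma base_stay:
  assumes t: "1 \<le> t" "t \<le> n" and y: "y \<in> inner (t - 1)" and nl: "comp (t - 1) y \<notin> losers t"
  shows "base t y = base (t - 1) y"
proof -
  obtain t' where t': "t = Suc t'" using t by (cases t) auto
  show ?thesis
  proof (cases "y \<in> Kc t")
    case False then show ?thesis using base_Suc t' by simp
  next
    case True
    have o: "comp (t - 1) y \<in> olds t" "y \<in> comp (t - 1) y" using olds_cover[OF True y] by auto
    then have ne: "olds t \<noteq> {}" by auto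
    have w: "comp (t - 1) y = win t" using o(1) nl unfolding losers_def by auto
    have "cs t y = base (t - 1) y" using cs_prop[OF t] ne w o(2) by auto
    then show ?thesis using base_Suc True t' by simp
  qed
qed

lemma isev_olds: "isev t L \<Longrightarrow> L \<in> olds t \<and> 1 \<le> t" unfolding isev_def losers_def by auto

lemma isev_form: assumes "isev t L"
  shows "\<exists>y\<in>inner (t - 1). L = comp (t - 1) y"
  using olds_comp_form isev_olds[OF assms] by blast

lemma Sd_ne: assumes "isev t L" shows "Sd t L \<noteq> {}"
proof -
  obtain y where y: "y \<in> inner (t - 1)" "L = comp (t - 1) y" using isev_form[OF assms] by blast
  obtain p where p: "p \<in> pres (t - 1)" "comp (t - 1) y = comp (t - 1) p" using comp_has_pres[OF y(1)] by blast
  have "p \<in> comp (t - 1) p" using comp_refl p(1) pres_inner by blast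
  then show ?thesis unfolding Sd_def using p y by auto
qed

lemma Sd_sub: "Sd t L \<subseteq> L" "Sd t L \<subseteq> pres (t - 1)" unfolding Sd_def by auto

lemma dd_le: "dd t L \<le> R"
proof -
  have "Sd t L \<subseteq> V" using Sd_sub pres_V by blast
  then have "card (Sd t L) \<le> card V" using finV card_mono by blast
  then have "flog (card (Sd t L)) \<le> flog (card V)" by (rule flog_mono)
  then show ?thesis unfolding dd_def using Rbig
    by (meson add_le_mono le_refl mult_le_mono order_trans)
qed

lemma dd_ge: "2 * (3 * k + 1) \<le> dd t L" unfolding dd_def by simp

lemma zone_sub: assumes "isev t L" "r \<le> R" shows "nball E (Sd t L) r \<subseteq> L"
proof -
  obtain y where y: "y \<in> inner (t - 1)" "L = comp (t - 1) y" using isev_form[OF assms(1)] by blast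
  show ?thesis using ball_comp[of "Sd t L" "t - 1" y r] Sd_sub y assms(2) by auto
qed

lemma isev_n: "isev t L \<Longrightarrow> t \<le> n \<Longrightarrow> L \<subseteq> Kc t"
  using olds_sub isev_olds by blast

lemma pie_prop:
  assumes ev: "isev t L" and tn: "t \<le> n"
  shows "bij_betw (pie t L) {1..k} {1..k} \<and> (\<forall>x\<in>L. base t x = pie t L (base (t - 1) x))"
proof -
  have t1: "1 \<le> t" using ev unfolding isev_def by simp
  obtain y where y: "y \<in> inner (t - 1)" "L = comp (t - 1) y" using isev_form[OF ev] by blast
  have tn1: "t - 1 \<le> n" using tn by simp
  obtain c0 where c0: "PC (nball E (comp (t - 1) y) l) c0" "\<forall>z\<in>comp (t - 1) y. c0 z = base (t - 1) z"
    using base_inv[OF tn1 y(1)] by blast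
  have LK: "L \<subseteq> Kc t" using isev_n[OF ev tn] .
  have "nball E L l \<subseteq> nball E (Kc t) l" using nball_mono_U[OF LK] .
  then have pc: "PC (nball E (comp (t - 1) y) l) (cs t)"
    using proper_coloring_mono cs_prop[OF t1 tn] y(2) by blast
  obtain \<phi> where \<phi>: "bij_betw \<phi> {1..k} {1..k}" "\<forall>v\<in>comp (t - 1) y. cs t v = \<phi> (c0 v)"
    using inL_app[OF y(1) c0(1) pc] by blast
  obtain t' where t': "t = Suc t'" using t1 by (cases t) auto
  have "\<forall>x\<in>L. base t x = \<phi> (base (t - 1) x)"
  proof
    fix x assume x: "x \<in> L"
    have "base t x = cs t x" using base_Suc[of t' x] x LK t' by auto
    then show "base t x = \<phi> (base (t - 1) x)" using \<phi>(2) c0(2) x y(2) by auto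
  qed
  then have ex: "\<exists>\<pi>. bij_betw \<pi> {1..k} {1..k} \<and> (\<forall>x\<in>L. base t x = \<pi> (base (t - 1) x))" using \<phi>(1) by blast
  show ?thesis unfolding pie_def by (rule someI_ex[OF ex])
qed

lemma finite_pres: "finite (pres t)" unfolding pres_def by simp

lemma comp_disj: "C1 = comp t a \<Longrightarrow> C2 = comp t b \<Longrightarrow> C1 \<noteq> C2 \<Longrightarrow> C1 \<inter> C2 = {}"
  using comp_inter by blast

lemma nested_or_far:
  assumes e1: "isev t1 L1" and e2: "isev t2 L2" and tt: "t1 \<le> t2" "t2 \<le> n" and ne: "(t1, L1) \<noteq> (t2, L2)"
    and x: "x \<in> nball E (Sd t1 L1) (dd t1 L1)" and y: "y \<in> nball E (Sd t2 L2) (dd t2 L2)"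
    and xy: "x = y \<or> (x, y) \<in> E"
  shows "t1 < t2 \<and> Kc t1 \<subseteq> L2"
proof -
  obtain s where s: "s \<in> Sd t1 L1" using Sd_ne[OF e1] by blast
  obtain y1 where y1: "y1 \<in> inner (t1 - 1)" "L1 = comp (t1 - 1) y1" using isev_form[OF e1] by blast
  have sL1: "s \<in> L1" using s Sd_sub by blast
  have L1s: "L1 = comp (t1 - 1) s" using y1 sL1 comp_eq by metis
  have sinn: "s \<in> inner (t1 - 1)" using sL1 y1 comp_sub by blast
  define C where "C = comp (t2 - 1) s"
  have L1C: "L1 \<subseteq> C" unfolding C_def L1s using comp_mono[of "t1 - 1" "t2 - 1"] tt by auto
  have SdC: "Sd t1 L1 \<subseteq> C" using L1C Sd_sub by blast
  have "pres (t1 - 1) \<subseteq> pres (t2 - 1)" by (rule pres_mono) (use tt in simp)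
  then have SdP: "Sd t1 L1 \<subseteq> pres (t2 - 1)" using Sd_sub(2)[of t1 L1] by blast
  have xC: "x \<in> C" using ball_comp[OF SdP, of s] SdC dd_le[of t1 L1] x unfolding C_def by blast
  have yL2: "y \<in> L2" using zone_sub[OF e2 dd_le] y by blast
  obtain y2 where y2: "y2 \<in> inner (t2 - 1)" "L2 = comp (t2 - 1) y2" using isev_form[OF e2] by blast
  have CL2: "C = L2"
  proof (cases "x = y")
    case True then show ?thesis using xC yL2 y2 comp_inter unfolding C_def by metis
  next
    case False
    then have E: "(x, y) \<in> E" using xy by simp
    have "y \<in> inner (t2 - 1)" using yL2 y2 comp_sub by blast
    then have "y \<in> C" using comp_adj[OF _ _ E] xC unfolding C_def by blast
    then show ?thesis using yL2 y2 comp_inter unfolding C_def by metis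
  qed
  have lt: "t1 < t2"
  proof (rule ccontr)
    assume "\<not> t1 < t2"
    then have "t1 = t2" using tt by simp
    then have "L1 = L2" using CL2 L1s unfolding C_def by simp
    then show False using ne \<open>t1 = t2\<close> by simp
  qed
  have t1n: "t1 \<le> n" "1 \<le> t1" using tt lt e1 unfolding isev_def by auto
  have sK: "s \<in> Kc t1" using sL1 isev_n[OF e1 t1n(1)] by blast
  have "Kc t1 = comp t1 s" using Kc_eq[OF t1n(2,1) sK] by simp
  also have "\<dots> \<subseteq> C" unfolding C_def using comp_mono[of t1 "t2 - 1"] lt by auto
  finally show ?thesis using lt CL2 by simp
qed

lemma doubling:
  assumes e1: "isev t1 L1" and e2: "isev t2 L2" and tt: "t1 < t2" "t2 \<le> n" and KL: "Kc t1 \<subseteq> L2"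
  shows "Sd t1 L1 \<subseteq> Sd t2 L2 \<and> dd t1 L1 + (3 * k + 1) \<le> dd t2 L2"
proof -
  have t1n: "t1 \<le> n" "1 \<le> t1" using tt e1 unfolding isev_def by auto
  have L1K: "L1 \<subseteq> Kc t1" using isev_n[OF e1 t1n(1)] .
  have Pm: "pres (t1 - 1) \<subseteq> pres (t2 - 1)" using pres_mono tt by simp
  have sub1: "Sd t1 L1 \<subseteq> Sd t2 L2" unfolding Sd_def using L1K KL Pm by blast
  have lo: "L1 \<in> olds t1" "L1 \<noteq> win t1" using e1 unfolding isev_def losers_def by auto
  then have ne: "olds t1 \<noteq> {}" by auto
  have wp: "win t1 \<in> olds t1" "cnt (t1 - 1) L1 \<le> cnt (t1 - 1) (win t1)" using win_prop[OF ne] lo by auto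
  obtain a where a: "L1 = comp (t1 - 1) a" using olds_comp_form lo by blast
  obtain b where b: "win t1 = comp (t1 - 1) b" using olds_comp_form wp by blast
  have dis: "L1 \<inter> win t1 = {}" using comp_disj[OF a b lo(2)] .
  have WK: "win t1 \<subseteq> Kc t1" using olds_sub[OF t1n(2,1) wp(1)] by blast
  have sub2: "win t1 \<inter> pres (t1 - 1) \<subseteq> Sd t2 L2" unfolding Sd_def using WK KL Pm by blast
  have fin: "finite (Sd t2 L2)" using Sd_sub(2) pres_V finV finite_subset by metis
  have "card (Sd t1 L1) + card (win t1 \<inter> pres (t1 - 1)) = card (Sd t1 L1 \<union> (win t1 \<inter> pres (t1 - 1)))"
    using dis finite_pres by (subst card_Un_disjoint) (auto simp: Sd_def)
  also have "\<dots> \<le> card (Sd t2 L2)" using sub1 sub2 fin by (intro card_mono) auto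
  finally have "2 * card (Sd t1 L1) \<le> card (Sd t2 L2)" using wp(2) unfolding cnt_def Sd_def by simp
  moreover have "1 \<le> card (Sd t1 L1)"
    using Sd_ne[OF e1] fin sub1 finite_subset by (metis One_nat_def Suc_leI card_gt_0_iff)
  ultimately have "flog (card (Sd t1 L1)) < flog (card (Sd t2 L2))" using flog_lt by blast
  then have "Suc (flog (card (Sd t1 L1))) \<le> flog (card (Sd t2 L2))" by simp
  then have "(3 * k + 1) * (2 + Suc (flog (card (Sd t1 L1)))) \<le> (3 * k + 1) * (2 + flog (card (Sd t2 L2)))"
    by (intro mult_le_mono2) simp
  then show ?thesis using sub1 unfolding dd_def by (simp add: algebra_simps)
qed

end


context setting begin

lemma tz_prop:
  assumes "hasz t x"
  shows "tz t x \<le> t \<and> isev (tz t x) (Lz t x) \<and> x \<in> zone (tz t x) (Lz t x)"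
proof -
  let ?P = "\<lambda>t'. \<exists>L. t' \<le> t \<and> isev t' L \<and> x \<in> zone t' L"
  have ex: "\<exists>t'. ?P t'" using assms unfolding hasz_def by blast
  have "?P (Least ?P)" by (rule LeastI_ex[OF ex])
  then have "?P (tz t x)" unfolding tz_def .
  then obtain L where L: "tz t x \<le> t" "isev (tz t x) L" "x \<in> zone (tz t x) L" by blast
  have "isev (tz t x) (Lz t x) \<and> x \<in> zone (tz t x) (Lz t x)"
    unfolding Lz_def using L(2,3) by (rule someI[where x = L, OF conjI])
  then show ?thesis using L(1) by blast
qed

lemma tz_le:
  assumes "t' \<le> t" "isev t' L" "x \<in> zone t' L"
  shows "tz t x \<le> t'"
proof -
  let ?P = "\<lambda>t'. \<exists>L. t' \<le> t \<and> isev t' L \<and> x \<in> zone t' L"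
  have "?P t'" using assms by blast
  then have "Least ?P \<le> t'" by (rule Least_le)
  then show ?thesis unfolding tz_def .
qed

lemma tz_min:
  assumes "hasz t x" "t' < tz t x" "isev t' L"
  shows "x \<notin> zone t' L"
proof
  assume z: "x \<in> zone t' L"
  have "t' \<le> t" using tz_prop[OF assms(1)] assms(2) by simp
  then have "tz t x \<le> t'" using tz_le z assms(3) by blast
  then show False using assms(2) by simp
qed

lemma tz_Suc:
  assumes "hasz t x"
  shows "hasz (Suc t) x \<and> tz (Suc t) x = tz t x \<and> Lz (Suc t) x = Lz t x"
proof -
  have p: "tz t x \<le> t" "isev (tz t x) (Lz t x)" "x \<in> zone (tz t x) (Lz t x)" using tz_prop[OF assms] by auto
  have h: "hasz (Suc t) x" unfolding hasz_def using p(2,3) p(1) le_SucI by blast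
  have le1: "tz (Suc t) x \<le> tz t x" using tz_le[of "tz t x" "Suc t" "Lz t x" x] p by simp
  have "\<not> tz (Suc t) x < tz t x"
  proof
    assume lt: "tz (Suc t) x < tz t x"
    have "isev (tz (Suc t) x) (Lz (Suc t) x)" "x \<in> zone (tz (Suc t) x) (Lz (Suc t) x)" using tz_prop[OF h] by auto
    then show False using tz_min[OF assms lt] by blast
  qed
  then have e: "tz (Suc t) x = tz t x" using le1 by simp
  show ?thesis using h e unfolding Lz_def by simp
qed

lemma zone_dst: assumes "x \<in> zone t L" shows "dst E (Sd t L) x < dd t L"
proof -
  have "dst E (Sd t L) x \<le> dd t L - 1" using assms unfolding zone_def by (rule dst_le)
  moreover have "1 \<le> dd t L" using dd_ge[of t L] by simp
  ultimately show ?thesis by simp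
qed

lemma zone_iff:
  assumes "x \<in> nball E (Sd t L) r"
  shows "x \<in> zone t L \<longleftrightarrow> dst E (Sd t L) x < dd t L"
proof -
  have "1 \<le> dd t L" using dd_ge[of t L] by simp
  then show ?thesis unfolding zone_def using dst_in_iff[OF assms, of "dd t L - 1"] by auto
qed

lemma zone_ball: "zone t L \<subseteq> nball E (Sd t L) (dd t L)"
  unfolding zone_def by (rule nball_mono_r) simp

lemma base_range: assumes "t \<le> n" "x \<in> inner t" shows "base t x \<in> {1..k}"
proof -
  obtain c where c: "PC (nball E (comp t x) l) c" "\<forall>y\<in>comp t x. c y = base t y" using base_inv[OF assms] by blast
  have "x \<in> comp t x" using comp_refl assms(2) by blast
  moreover then have "x \<in> nball E (comp t x) l" using nball_0_sub by blast
  ultimately show ?thesis using c unfolding proper_coloring_def by auto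
qed

lemma base_proper: assumes "t \<le> n" "x \<in> inner t" "y \<in> comp t x" "(x, y) \<in> E"
  shows "base t x \<noteq> base t y"
proof -
  obtain c where c: "PC (nball E (comp t x) l) c" "\<forall>y\<in>comp t x. c y = base t y" using base_inv[OF assms(1,2)] by blast
  have xc: "x \<in> comp t x" using comp_refl assms(2) by blast
  have "x \<in> nball E (comp t x) l" "y \<in> nball E (comp t x) l" using nball_0_sub xc assms(3) by blast+
  then have "(x, y) \<in> induced_edges E (nball E (comp t x) l)" using assms(4) unfolding induced_edges_def by auto
  then have "c x \<noteq> c y" using c(1) unfolding proper_coloring_def by auto
  then show ?thesis using c(2) xc assms(3) by auto
qed

lemma Lab_stable:
  assumes x: "x \<in> pres t0" and tt: "t0 \<le> t" "t \<le> n"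
  shows "Lab t x = Lab t0 x"
  using tt
proof (induction t)
  case 0 then show ?case by simp
next
  case (Suc t)
  show ?case
  proof (cases "t0 = Suc t")
    case True then show ?thesis by simp
  next
    case False
    then have t0t: "t0 \<le> t" "t \<le> n" using Suc.prems by auto
    have IH: "Lab t x = Lab t0 x" using Suc.IH t0t by simp
    have xp: "x \<in> pres t" using x pres_mono t0t by blast
    have xi: "x \<in> inner t" using xp pres_inner by blast
    have t1: "1 \<le> Suc t" "Suc t \<le> n" using Suc.prems by auto
    show ?thesis
    proof (cases "hasz t x")
      case True
      then show ?thesis using tz_Suc[OF True] IH unfolding Lab_def by simp
    next
      case nh: False
      have ev_in: "\<And>L. isev (Suc t) L \<Longrightarrow> x \<in> L \<Longrightarrow> x \<in> Sd (Suc t) L"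
        unfolding Sd_def using xp by simp
      have zero: "\<And>L. isev (Suc t) L \<Longrightarrow> x \<in> L \<Longrightarrow> x \<in> zone (Suc t) L"
        unfolding zone_def using ev_in nball_0_sub by blast
      show ?thesis
      proof (cases "hasz (Suc t) x")
        case True
        have p: "tz (Suc t) x \<le> Suc t" "isev (tz (Suc t) x) (Lz (Suc t) x)" "x \<in> zone (tz (Suc t) x) (Lz (Suc t) x)"
          using tz_prop[OF True] by auto
        have tzs: "tz (Suc t) x = Suc t"
        proof (rule ccontr)
          assume "tz (Suc t) x \<noteq> Suc t"
          then have "tz (Suc t) x \<le> t" using p by simp
          then have "hasz t x" unfolding hasz_def using p by blast
          then show False using nh by simp
        qed
        let ?L = "Lz (Suc t) x"
        have ev: "isev (Suc t) ?L" using p tzs by simp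
        have xz: "x \<in> zone (Suc t) ?L" using p tzs by simp
        have xL: "x \<in> ?L" using zone_sub[OF ev dd_le[of "Suc t" ?L]] zone_ball[of "Suc t" ?L] xz by blast
        have xS: "x \<in> Sd (Suc t) ?L" using ev_in[OF ev xL] .
        have "dst E (Sd (Suc t) ?L) x = 0" using dst_le[of x E "Sd (Suc t) ?L" 0] xS by simp
        then have lev: "dst E (Sd (Suc t) ?L) x + (3 * k + 1) - dd (Suc t) ?L = 0" using dd_ge[of "Suc t" ?L] by simp
        have "Lab (Suc t) x = zcol (Suc t) ?L x" unfolding Lab_def using True tzs by simp
        also have "\<dots> = base t x" unfolding zcol_def using lev Gl0 k1 by simp
        also have "\<dots> = Lab t x" unfolding Lab_def using nh by simp
        finally show ?thesis using IH by simp
      next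
        case nh2: False
        have nl: "comp t x \<notin> losers (Suc t)"
        proof
          assume "comp t x \<in> losers (Suc t)"
          then have ev: "isev (Suc t) (comp t x)" unfolding isev_def by simp
          have "x \<in> zone (Suc t) (comp t x)" using zero[OF ev] comp_refl xi by blast
          then have "hasz (Suc t) x" unfolding hasz_def using ev by blast
          then show False using nh2 by simp
        qed
        have "base (Suc t) x = base t x" using base_stay[OF t1] xi nl by simp
        then show ?thesis using nh nh2 IH unfolding Lab_def by simp
      qed
    qed
  qed
qed

end


context setting begin

lemma base_stable_ext:
  assumes ev: "isev te Le" and tt: "te \<le> t'" "t' \<le> n" and yK: "y \<in> Kc te"
    and yb: "y \<in> nball E (Sd te Le) (dd te Le)"
    and noz: "\<And>t'' L. te < t'' \<Longrightarrow> t'' \<le> t' \<Longrightarrow> isev t'' L \<Longrightarrow> y \<notin> zone t'' L"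
  shows "base t' y = base te y"
  using tt(1)
proof (induction t' rule: dec_induct)
  case base then show ?case by simp
next
  case (step m)
  have te1: "1 \<le> te" "te \<le> n" using ev tt step unfolding isev_def by auto
  have m1: "1 \<le> Suc m" "Suc m \<le> n" using step tt by auto
  have yinn: "y \<in> inner m"
    using yK comp_sub inner_mono[OF step(1)] unfolding Kc_def by blast
  have nl: "comp m y \<notin> losers (Suc m)"
  proof
    assume "comp m y \<in> losers (Suc m)"
    then have evg: "isev (Suc m) (comp m y)" unfolding isev_def by simp
    have "Kc te = comp te y" using Kc_eq[OF te1 yK] by simp
    also have "\<dots> \<subseteq> comp m y" using comp_mono[OF step(1)] by blast
    finally have KL: "Kc te \<subseteq> comp m y" .
    have d: "Sd te Le \<subseteq> Sd (Suc m) (comp m y) \<and> dd te Le + (3 * k + 1) \<le> dd (Suc m) (comp m y)"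
      using doubling[OF ev evg _ m1(2) KL] step by simp
    have "y \<in> nball E (Sd (Suc m) (comp m y)) (dd te Le)" using yb nball_mono_U d by blast
    moreover have "dd te Le \<le> dd (Suc m) (comp m y) - 1" using conjunct2[OF d] by linarith
    ultimately have "y \<in> zone (Suc m) (comp m y)" unfolding zone_def using nball_mono_r by blast
    then show False using noz[of "Suc m" "comp m y"] evg step by simp
  qed
  have "base (Suc m) y = base m y" using base_stay[OF m1] yinn nl by simp
  then show ?case using step by simp
qed

lemma dst_adj_sym:
  assumes "x \<in> nball E S r" "(x, y) \<in> E"
  shows "dst E S y \<le> Suc (dst E S x) \<and> dst E S x \<le> Suc (dst E S y)"
proof -
  have y: "y \<in> nball E S (Suc (dst E S x))" "dst E S y \<le> Suc (dst E S x)" using dst_adj[OF assms] by auto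
  have "dst E S x \<le> Suc (dst E S y)" using dst_adj(2)[OF y(1) symE[OF assms(2)]] .
  then show ?thesis using y by simp
qed

lemma lev_adj: "(a::nat) \<le> Suc b \<Longrightarrow> b \<le> Suc a \<Longrightarrow>
   (b + c - d = a + c - d \<or> b + c - d = Suc (a + c - d) \<or> a + c - d = Suc (b + c - d))"
  by arith

lemma ev_facts:
  assumes ev: "isev te Le" and te: "te \<le> n" and x: "x \<in> nball E (Sd te Le) (dd te Le)"
  shows "x \<in> Le \<and> x \<in> inner (te - 1) \<and> base (te - 1) x \<in> {1..k}"
proof -
  have xL: "x \<in> Le" using zone_sub[OF ev dd_le] x by blast
  obtain z where z: "z \<in> inner (te - 1)" "Le = comp (te - 1) z" using isev_form[OF ev] by blast
  have "x \<in> inner (te - 1)" using xL z comp_sub by blast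
  moreover have "te - 1 \<le> n" using te by simp
  ultimately show ?thesis using xL base_range by blast
qed

lemma ev_proper:
  assumes ev: "isev te Le" and te: "te \<le> n" and x: "x \<in> nball E (Sd te Le) (dd te Le)"
    and y: "y \<in> nball E (Sd te Le) (dd te Le)" and xy: "(x, y) \<in> E"
  shows "base (te - 1) x \<noteq> base (te - 1) y"
proof -
  have xL: "x \<in> Le" and yL: "y \<in> Le" using ev_facts[OF ev te x] ev_facts[OF ev te y] by auto
  obtain z where z: "z \<in> inner (te - 1)" "Le = comp (te - 1) z" using isev_form[OF ev] by blast
  have xi: "x \<in> inner (te - 1)" using xL z comp_sub by blast
  have "y \<in> comp (te - 1) x" using xL yL z comp_eq by metis
  then show ?thesis using base_proper[OF _ xi _ xy] te by simp
qed

lemma same_zone: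
  assumes ev: "isev te Le" and te: "te \<le> n" and x: "x \<in> zone te Le" and y: "y \<in> zone te Le"
    and xy: "(x, y) \<in> E"
  shows "zcol te Le x \<noteq> zcol te Le y"
proof -
  have xb: "x \<in> nball E (Sd te Le) (dd te Le)" and yb: "y \<in> nball E (Sd te Le) (dd te Le)"
    using x y zone_ball by blast+
  have pi: "bij_betw (pie te Le) {1..k} {1..k}" using pie_prop[OF ev te] by blast
  have ne: "base (te - 1) x \<noteq> base (te - 1) y" using ev_proper[OF ev te xb yb xy] .
  have r: "base (te - 1) x \<in> {1..k}" "base (te - 1) y \<in> {1..k}" using ev_facts[OF ev te xb] ev_facts[OF ev te yb] by auto
  have "dst E (Sd te Le) y \<le> Suc (dst E (Sd te Le) x) \<and> dst E (Sd te Le) x \<le> Suc (dst E (Sd te Le) y)"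
    using dst_adj_sym[OF xb xy] .
  then have lv: "let s = dst E (Sd te Le) x + (3 * k + 1) - dd te Le; s' = dst E (Sd te Le) y + (3 * k + 1) - dd te Le
     in s' = s \<or> s' = Suc s \<or> s = Suc s'"
    using lev_adj[of "dst E (Sd te Le) x" "dst E (Sd te Le) y" "3 * k + 1" "dd te Le"] unfolding Let_def by blast
  show ?thesis unfolding zcol_def using Gl_sep[OF pi r(1) r(2) ne] lv by (simp add: Let_def)
qed

lemma boundary:
  assumes ev: "isev te Le" and te: "te \<le> n" and x: "x \<in> zone te Le" and y: "y \<notin> zone te Le"
    and xy: "(x, y) \<in> E"
  shows "zcol te Le x \<noteq> base te y \<and> y \<in> nball E (Sd te Le) (dd te Le)"
proof -
  let ?S = "Sd te Le" and ?d = "dd te Le"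
  have xb: "x \<in> nball E ?S ?d" using x zone_ball by blast
  have dx: "dst E ?S x < ?d" using zone_dst[OF x] .
  have ya: "y \<in> nball E ?S (Suc (dst E ?S x))" using dst_adj[OF xb xy] by blast
  have yb: "y \<in> nball E ?S ?d" using ya nball_mono_r[of "Suc (dst E ?S x)" ?d E ?S] dx by auto
  have dy: "?d \<le> dst E ?S y" using zone_iff[OF yb] y by simp
  have "dst E ?S y \<le> Suc (dst E ?S x)" using dst_adj_sym[OF xb xy] by simp
  then have lx: "dst E ?S x + (3 * k + 1) - ?d = 3 * k" using dy dx by simp
  have pi: "bij_betw (pie te Le) {1..k} {1..k}" and pb: "\<forall>z\<in>Le. base te z = pie te Le (base (te - 1) z)"
    using pie_prop[OF ev te] by auto
  have ne: "base (te - 1) x \<noteq> base (te - 1) y" using ev_proper[OF ev te xb yb xy] .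
  have r: "base (te - 1) x \<in> {1..k}" "base (te - 1) y \<in> {1..k}" using ev_facts[OF ev te xb] ev_facts[OF ev te yb] by auto
  have yL: "y \<in> Le" using ev_facts[OF ev te yb] by blast
  have "base te y = Gl k (pie te Le) (Suc (3 * k)) (base (te - 1) y)"
    using pb yL Glend[OF pi _ r(2), of "Suc (3 * k)"] by simp
  moreover have "zcol te Le x = Gl k (pie te Le) (3 * k) (base (te - 1) x)" unfolding zcol_def using lx by simp
  ultimately show ?thesis using Gl_sep[OF pi r ne, where s="3 * k" and s'="Suc (3 * k)"] yb by simp
qed

lemma y_none:
  assumes ev: "isev te Le" and tt: "te \<le> t" "t \<le> n" and x: "x \<in> zone te Le" and xy: "(x, y) \<in> E"
    and nh: "\<not> hasz t y"
  shows "Lab t y = base te y"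
proof -
  have yz: "y \<notin> zone te Le" using nh tt ev unfolding hasz_def by blast
  have yb: "y \<in> nball E (Sd te Le) (dd te Le)" using boundary[OF ev _ x yz xy] tt by simp
  have yK: "y \<in> Kc te" using ev_facts[OF ev _ yb] isev_n[OF ev] tt by auto
  have "base t y = base te y"
    by (rule base_stable_ext[OF ev tt yK yb]) (use nh in \<open>auto simp: hasz_def\<close>)
  then show ?thesis unfolding Lab_def using nh by simp
qed

lemma y_nested:
  assumes ev: "isev te Le" and tt: "te \<le> t" "t \<le> n" and x: "x \<in> zone te Le" and xy: "(x, y) \<in> E"
    and yz: "y \<notin> zone te Le" and h: "hasz t y" and lt: "te < tz t y" and KL: "Kc te \<subseteq> Lz t y"
  shows "Lab t y = base te y"
proof -
  let ?tf = "tz t y" and ?Lf = "Lz t y"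
  have f: "?tf \<le> t" "isev ?tf ?Lf" "y \<in> zone ?tf ?Lf" using tz_prop[OF h] by auto
  have yb: "y \<in> nball E (Sd te Le) (dd te Le)" using boundary[OF ev _ x yz xy] tt by simp
  have d: "Sd te Le \<subseteq> Sd ?tf ?Lf \<and> dd te Le + (3 * k + 1) \<le> dd ?tf ?Lf"
    using doubling[OF ev f(2) lt _ KL] f(1) tt by simp
  have "dst E (Sd ?tf ?Lf) y \<le> dst E (Sd te Le) y" using dst_mono_S d yb by blast
  also have "\<dots> \<le> dd te Le" using dst_le[OF yb] .
  finally have "dst E (Sd ?tf ?Lf) y + (3 * k + 1) - dd ?tf ?Lf = 0" using d by simp
  then have z: "zcol ?tf ?Lf y = base (?tf - 1) y" unfolding zcol_def using Gl0 k1 by simp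
  have yK: "y \<in> Kc te" using ev_facts[OF ev _ yb] isev_n[OF ev] tt by auto
  have "base (?tf - 1) y = base te y"
  proof (rule base_stable_ext[OF ev _ _ yK yb])
    show "te \<le> ?tf - 1" using lt by simp
    show "?tf - 1 \<le> n" using f(1) tt by simp
    fix t'' L assume "te < t''" "t'' \<le> ?tf - 1" "isev t'' L"
    then show "y \<notin> zone t'' L" using tz_min[OF h] by simp
  qed
  then show ?thesis unfolding Lab_def using h z by simp
qed

lemma x_only:
  assumes t: "t \<le> n" and hx: "hasz t x" and ny: "\<not> hasz t y" and xy: "(x, y) \<in> E"
  shows "Lab t x \<noteq> Lab t y"
proof -
  let ?te = "tz t x" and ?Le = "Lz t x"
  have e: "?te \<le> t" "isev ?te ?Le" "x \<in> zone ?te ?Le" using tz_prop[OF hx] by auto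
  have yz: "y \<notin> zone ?te ?Le" using ny e unfolding hasz_def by blast
  have "zcol ?te ?Le x \<noteq> base ?te y" using boundary[OF e(2) _ e(3) yz xy] e t by simp
  moreover have "Lab t y = base ?te y" using y_none[OF e(2) e(1) t e(3) xy ny] .
  ultimately show ?thesis unfolding Lab_def using hx by simp
qed

lemma both_ordered:
  assumes t: "t \<le> n" and hx: "hasz t x" and hy: "hasz t y" and xy: "(x, y) \<in> E"
    and le: "tz t x \<le> tz t y" and ne: "(tz t x, Lz t x) \<noteq> (tz t y, Lz t y)"
  shows "Lab t x \<noteq> Lab t y"
proof -
  let ?te = "tz t x" and ?Le = "Lz t x" and ?tf = "tz t y" and ?Lf = "Lz t y"
  have e: "?te \<le> t" "isev ?te ?Le" "x \<in> zone ?te ?Le" using tz_prop[OF hx] by auto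
  have f: "?tf \<le> t" "isev ?tf ?Lf" "y \<in> zone ?tf ?Lf" using tz_prop[OF hy] by auto
  have xb: "x \<in> nball E (Sd ?te ?Le) (dd ?te ?Le)" using e(3) zone_ball by blast
  have yb: "y \<in> nball E (Sd ?tf ?Lf) (dd ?tf ?Lf)" using f(3) zone_ball by blast
  have tfn: "?tf \<le> n" using f(1) t by simp
  have nf: "?te < ?tf \<and> Kc ?te \<subseteq> ?Lf"
    using nested_or_far[OF e(2) f(2) le tfn ne xb yb] xy by blast
  have yz: "y \<notin> zone ?te ?Le" using tz_min[OF hy _ e(2)] nf by blast
  have "zcol ?te ?Le x \<noteq> base ?te y" using boundary[OF e(2) _ e(3) yz xy] e t by simp
  moreover have "Lab t y = base ?te y" using y_nested[OF e(2) e(1) t e(3) xy yz hy] nf by blast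
  ultimately show ?thesis unfolding Lab_def using hx by simp
qed

lemma Lab_proper:
  assumes t: "t \<le> n" and x: "x \<in> pres t" and y: "y \<in> pres t" and xy: "(x, y) \<in> E"
  shows "Lab t x \<noteq> Lab t y"
proof (cases "hasz t x"; cases "hasz t y")
  assume hx: "hasz t x" and hy: "hasz t y"
  show ?thesis
  proof (cases "(tz t x, Lz t x) = (tz t y, Lz t y)")
    case True
    have e: "tz t x \<le> t" "isev (tz t x) (Lz t x)" "x \<in> zone (tz t x) (Lz t x)" using tz_prop[OF hx] by auto
    have "y \<in> zone (tz t x) (Lz t x)" using tz_prop[OF hy] True by auto
    then have "zcol (tz t x) (Lz t x) x \<noteq> zcol (tz t x) (Lz t x) y"
      using same_zone[OF e(2) _ e(3) _ xy] e(1) t by simp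
    then show ?thesis unfolding Lab_def using hx hy True by simp
  next
    case False
    show ?thesis
    proof (cases "tz t x \<le> tz t y")
      case True then show ?thesis by (rule both_ordered[OF t hx hy xy _ False])
    next
      case le: False
      have "Lab t y \<noteq> Lab t x" using both_ordered[OF t hy hx symE[OF xy]] le False by auto
      then show ?thesis by simp
    qed
  qed
next
  assume "hasz t x" "\<not> hasz t y" then show ?thesis using x_only t xy by blast
next
  assume "\<not> hasz t x" "hasz t y"
  then have "Lab t y \<noteq> Lab t x" using x_only t symE[OF xy] by blast
  then show ?thesis by simp
next
  assume nx: "\<not> hasz t x" and ny: "\<not> hasz t y"
  have xi: "x \<in> inner t" and yi: "y \<in> inner t" using x y pres_inner by blast+
  have "y \<in> comp t x" using comp_adj[OF comp_refl[OF xi] yi xy] .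
  then show ?thesis unfolding Lab_def using nx ny base_proper[OF t xi _ xy] by simp
qed

lemma Lab_range:
  assumes t: "t \<le> n" and x: "x \<in> pres t"
  shows "Lab t x \<in> {1..k+1}"
proof (cases "hasz t x")
  case True
  have e: "tz t x \<le> t" "isev (tz t x) (Lz t x)" "x \<in> zone (tz t x) (Lz t x)" using tz_prop[OF True] by auto
  have te: "tz t x \<le> n" using e t by simp
  have pi: "bij_betw (pie (tz t x) (Lz t x)) {1..k} {1..k}" using pie_prop[OF e(2) te] by blast
  have r: "base (tz t x - 1) x \<in> {1..k}" using ev_facts[OF e(2) te] e(3) zone_ball by blast
  show ?thesis unfolding Lab_def zcol_def using True Gl_range[OF pi r] by simp
next
  case False
  have "x \<in> inner t" using x pres_inner by blast
  then have "base t x \<in> {1..k}" using base_range[OF t] by blast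
  then show ?thesis unfolding Lab_def using False by auto
qed

end


locale inv = alg +
  fixes m :: nat
  assumes mlen: "m \<le> length \<sigma>" and Rb: "(3 * k + 1) * (2 + flog (length \<sigma>)) \<le> R"
begin

definition W where "W = nball E (pres m) (R + l)"
definition F where "F = induced_edges E W"
definition \<sigma>' where "\<sigma>' = take m \<sigma>"

interpretation A: alg k l R F \<sigma>' .

lemma F_alt: "F = E \<inter> (W \<times> W)" unfolding F_def induced_edges_def by simp

lemma pres_eq: "t \<le> m \<Longrightarrow> A.pres t = pres t"
  unfolding \<sigma>'_def alg.pres_def by (simp add: min_absorb1)

lemma pres_le: "t \<le> m \<Longrightarrow> pres t \<subseteq> pres m"
  unfolding pres_def by (metis set_take_subset_set_take)

lemma inW: "t \<le> m \<Longrightarrow> r \<le> R + l \<Longrightarrow> U \<subseteq> pres t \<Longrightarrow> nball E U r \<subseteq> W"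
  unfolding W_def using nball_mono_U nball_mono_r pres_le by (meson order_trans)

lemma ballF: "nball E U r \<subseteq> W \<Longrightarrow> nball F U r = nball E U r"
  unfolding F_alt by (rule nball_restrict)

lemma Fcap: "X \<subseteq> W \<Longrightarrow> F \<inter> (X \<times> X) = E \<inter> (X \<times> X)" unfolding F_alt by auto

lemma inner_W: "t \<le> m \<Longrightarrow> inner t \<subseteq> W"
  unfolding inner_def using inW by simp

lemma inner_eq: "t \<le> m \<Longrightarrow> A.inner t = inner t"
  unfolding A.inner_def using pres_eq ballF inner_W unfolding inner_def by simp

lemma comp_eq: "t \<le> m \<Longrightarrow> A.comp t x = comp t x"
  unfolding A.comp_def comp_def using inner_eq Fcap[OF inner_W] by simp

lemma vt_eq: "1 \<le> t \<Longrightarrow> t \<le> m \<Longrightarrow> A.vt t = vt t"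
  unfolding \<sigma>'_def alg.vt_def using mlen by simp

lemma Kc_eq: "1 \<le> t \<Longrightarrow> t \<le> m \<Longrightarrow> A.Kc t = Kc t"
  unfolding A.Kc_def Kc_def using vt_eq comp_eq by simp

lemma olds_eq: "1 \<le> t \<Longrightarrow> t \<le> m \<Longrightarrow> A.olds t = olds t"
  unfolding A.olds_def olds_def using Kc_eq inner_eq[of "t - 1"] comp_eq[of "t - 1"] by simp

lemma cnt_eq: "t \<le> m \<Longrightarrow> A.cnt t = cnt t"
  unfolding A.cnt_def cnt_def using pres_eq by (intro ext) simp

lemma win_eq: "1 \<le> t \<Longrightarrow> t \<le> m \<Longrightarrow> A.win t = win t"
  unfolding A.win_def win_def using olds_eq cnt_eq[of "t - 1"] by simp

lemma losers_eq: "1 \<le> t \<Longrightarrow> t \<le> m \<Longrightarrow> A.losers t = losers t"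
  unfolding A.losers_def losers_def using olds_eq win_eq by simp

lemma nbKc_W: "1 \<le> t \<Longrightarrow> t \<le> m \<Longrightarrow> nball E (Kc t) l \<subseteq> W"
proof -
  assume t: "1 \<le> t" "t \<le> m"
  have "Kc t \<subseteq> inner t" unfolding Kc_def comp_def by auto
  then have "nball E (Kc t) l \<subseteq> nball E (inner t) l" by (rule nball_mono_U)
  also have "\<dots> = nball E (pres t) (R + l)" unfolding inner_def by (rule nball_add)
  also have "\<dots> \<subseteq> W" using inW[OF t(2)] by simp
  finally show ?thesis .
qed

lemma base_eq: "t \<le> m \<Longrightarrow> A.base t = base t"
proof (induction t)
  case 0 then show ?case by simp
next
  case (Suc t)
  have IH: "A.base t = base t" using Suc by simp
  have t: "1 \<le> Suc t" "Suc t \<le> m" using Suc.prems by auto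
  have B: "nball F (Kc (Suc t)) l = nball E (Kc (Suc t)) l" using ballF nbKc_W[OF t] by blast
  have IE: "induced_edges F (nball E (Kc (Suc t)) l) = induced_edges E (nball E (Kc (Suc t)) l)"
    unfolding induced_edges_def using Fcap[OF nbKc_W[OF t]] by simp
  show ?case unfolding A.base.simps base.simps Let_def IH Kc_eq[OF t] olds_eq[OF t] win_eq[OF t] B IE ..
qed

lemma Sd_eq: "t \<le> m \<Longrightarrow> A.Sd t L = Sd t L"
  unfolding A.Sd_def Sd_def using pres_eq[of "t - 1"] by simp

lemma dd_eq: "t \<le> m \<Longrightarrow> A.dd t L = dd t L"
  unfolding A.dd_def dd_def using Sd_eq by simp

lemma dd_le_R: "dd t L \<le> R"
proof -
  have "card (Sd t L) \<le> card (pres (t - 1))" unfolding Sd_def pres_def by (intro card_mono) auto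
  also have "\<dots> \<le> length \<sigma>" unfolding pres_def by (metis card_length length_take min.bounded_iff order_refl)
  finally have "flog (card (Sd t L)) \<le> flog (length \<sigma>)" by (rule flog_mono)
  then show ?thesis unfolding dd_def using Rb by (meson add_le_mono le_refl mult_le_mono order_trans)
qed

lemma zone_W: "1 \<le> t \<Longrightarrow> t \<le> m \<Longrightarrow> r \<le> R \<Longrightarrow> nball E (Sd t L) r \<subseteq> W"
  using inW[of "t - 1" r "Sd t L"] unfolding Sd_def by auto

lemma zone_eq: "1 \<le> t \<Longrightarrow> t \<le> m \<Longrightarrow> A.zone t L = zone t L"
  unfolding A.zone_def zone_def using Sd_eq dd_eq ballF zone_W dd_le_R
  by (metis diff_le_self le_trans)

lemma pie_eq: "1 \<le> t \<Longrightarrow> t \<le> m \<Longrightarrow> A.pie t L = pie t L"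
  unfolding A.pie_def pie_def using base_eq[of t] base_eq[of "t - 1"] by simp

lemma isev_eq: "t \<le> m \<Longrightarrow> A.isev t L = isev t L"
  unfolding A.isev_def isev_def using losers_eq by auto

lemma hasz_eq: "t \<le> m \<Longrightarrow> A.hasz t x = hasz t x"
  unfolding A.hasz_def hasz_def using isev_eq zone_eq
  by (metis (no_types, lifting) A.isev_def le_trans)

lemma tz_eq: "t \<le> m \<Longrightarrow> A.tz t x = tz t x"
proof -
  assume t: "t \<le> m"
  have "\<And>t'. (\<exists>L. t' \<le> t \<and> A.isev t' L \<and> x \<in> A.zone t' L) = (\<exists>L. t' \<le> t \<and> isev t' L \<and> x \<in> zone t' L)"
    using isev_eq zone_eq t by (metis (no_types, lifting) A.isev_def le_trans)
  then show ?thesis unfolding A.tz_def tz_def by simp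
qed

lemma tz_le_t: "hasz t x \<Longrightarrow> tz t x \<le> t"
proof -
  assume h: "hasz t x"
  let ?P = "\<lambda>t'. \<exists>L. t' \<le> t \<and> isev t' L \<and> x \<in> zone t' L"
  have ex: "\<exists>t'. ?P t'" using h unfolding hasz_def by blast
  have "?P (Least ?P)" by (rule LeastI_ex[OF ex])
  then show ?thesis unfolding tz_def by blast
qed

lemma Lz_eq: "t \<le> m \<Longrightarrow> hasz t x \<Longrightarrow> A.Lz t x = Lz t x"
proof -
  assume t: "t \<le> m" and h: "hasz t x"
  have le: "tz t x \<le> m" using tz_le_t[OF h] t by simp
  have "\<And>L. (A.isev (tz t x) L \<and> x \<in> A.zone (tz t x) L) = (isev (tz t x) L \<and> x \<in> zone (tz t x) L)"
    using isev_eq[OF le] zone_eq[OF _ le] by (metis A.isev_def)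
  then show ?thesis unfolding A.Lz_def Lz_def using tz_eq[OF t] by simp
qed

lemma dst_eq:
  assumes "x \<in> nball E S r0" and eq: "\<And>r. r \<le> r0 \<Longrightarrow> nball F S r = nball E S r"
  shows "dst F S x = dst E S x"
proof -
  have d: "dst E S x \<le> r0" using dst_le[OF assms(1)] .
  have "x \<in> nball E S (dst E S x)" using dst_in[OF assms(1)] .
  then have xF: "x \<in> nball F S (dst E S x)" using eq[OF d] by simp
  have 1: "dst F S x \<le> dst E S x" using dst_le[OF xF] .
  have "x \<in> nball F S (dst F S x)" using dst_in[OF xF] .
  then have "x \<in> nball E S (dst F S x)" using eq 1 d by simp
  then have "dst E S x \<le> dst F S x" by (rule dst_le)
  then show ?thesis using 1 by simp
qed

lemma zcol_eq:
  assumes t: "1 \<le> t" "t \<le> m" and x: "x \<in> zone t L"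
  shows "A.zcol t L x = zcol t L x"
proof -
  have "dst F (Sd t L) x = dst E (Sd t L) x"
  proof (rule dst_eq)
    show "x \<in> nball E (Sd t L) (dd t L - 1)" using x unfolding zone_def .
    fix r assume "r \<le> dd t L - 1"
    then have "r \<le> R" using dd_le_R[of t L] by simp
    then show "nball F (Sd t L) r = nball E (Sd t L) r" using ballF zone_W[OF t] by blast
  qed
  then show ?thesis unfolding A.zcol_def zcol_def using Sd_eq[OF t(2)] dd_eq[OF t(2)] pie_eq[OF t] base_eq[of "t - 1"] t
    by simp
qed

lemma Lab_eq: "t \<le> m \<Longrightarrow> A.Lab t x = Lab t x"
proof -
  assume t: "t \<le> m"
  show ?thesis
  proof (cases "hasz t x")
    case True
    have le: "tz t x \<le> m" using tz_le_t[OF True] t by simp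
    let ?P = "\<lambda>t'. \<exists>L. t' \<le> t \<and> isev t' L \<and> x \<in> zone t' L"
    have ex: "\<exists>t'. ?P t'" using True unfolding hasz_def by blast
    have "?P (Least ?P)" by (rule LeastI_ex[OF ex])
    then have "?P (tz t x)" unfolding tz_def .
    then obtain L0 where L0: "isev (tz t x) L0" "x \<in> zone (tz t x) L0" by blast
    have "isev (tz t x) (Lz t x) \<and> x \<in> zone (tz t x) (Lz t x)"
      unfolding Lz_def using L0 by (rule someI[where x = L0, OF conjI])
    then have z: "1 \<le> tz t x" "x \<in> zone (tz t x) (Lz t x)" unfolding isev_def by auto
    show ?thesis unfolding A.Lab_def Lab_def using True hasz_eq[OF t] tz_eq[OF t] Lz_eq[OF t True]
        zcol_eq[OF z(1) le z(2)] by simp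
  next
    case False
    then show ?thesis unfolding A.Lab_def Lab_def using hasz_eq[OF t] base_eq[OF t] by simp
  qed
qed

lemma outc_eq: "1 \<le> t \<Longrightarrow> t \<le> m \<Longrightarrow> A.outc t = outc t"
  unfolding A.outc_def outc_def using Lab_eq vt_eq by simp

end


lemma flog_ln: assumes "2 \<le> n" shows "real (flog n) \<le> ln (real n) / ln 2"
proof -
  have "2 ^ flog n \<le> n" using flog_pow assms by simp
  then have "real (2 ^ flog n) \<le> real n" by linarith
  then have "ln (real (2 ^ flog n)) \<le> ln (real n)" by (subst ln_le_cancel_iff) (use assms in auto)
  moreover have "ln (real (2 ^ flog n)) = real (flog n) * ln 2" by (simp add: ln_realpow)
  ultimately have "real (flog n) * ln 2 \<le> ln (real n)" by simp
  then show ?thesis by (simp add: field_simps)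
qed

lemma T_bigo: "(\<lambda>n. real ((3 * k + 1) * (2 + flog n) + l)) \<in> O(\<lambda>n. ln (real n))"
proof (rule bigoI[where c = "(3 * (3 * k + 1) + l) / ln 2"])
  show "\<forall>\<^sub>F n in at_top. norm (real ((3 * k + 1) * (2 + flog n) + l)) \<le>
        (3 * (3 * k + 1) + l) / ln 2 * norm (ln (real n))"
    using eventually_ge_at_top[of "2::nat"]
  proof eventually_elim
    case (elim n)
    define X where "X = ln (real n) / ln 2"
    have l2: "ln 2 > (0::real)" by simp
    have lnn: "ln 2 \<le> ln (real n)" using elim by simp
    have X1: "1 \<le> X" unfolding X_def using lnn l2 by (simp add: field_simps)
    have fX: "real (flog n) \<le> X" unfolding X_def using flog_ln[OF elim] .
    have "real ((3 * k + 1) * (2 + flog n) + l) = real (3 * k + 1) * (2 + real (flog n)) + real l" by (simp add: algebra_simps)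
    also have "\<dots> \<le> real (3 * k + 1) * (3 * X) + real l * X"
    proof (rule add_mono)
      show "real (3 * k + 1) * (2 + real (flog n)) \<le> real (3 * k + 1) * (3 * X)"
        using X1 fX by (intro mult_left_mono) auto
      show "real l \<le> real l * X" using X1 by (simp add: mult_le_cancel_left1)
    qed
    also have "\<dots> = real (3 * (3 * k + 1) + l) * X" by (simp add: algebra_simps)
    also have "\<dots> = (3 * (3 * k + 1) + l) / ln 2 * ln (real n)" unfolding X_def by simp
    finally have fin: "real ((3 * k + 1) * (2 + flog n) + l) \<le> (3 * (3 * k + 1) + l) / ln 2 * ln (real n)" .
    have "0 \<le> ln (real n)" using lnn l2 by linarith
    then have "norm (ln (real n)) = ln (real n)" by simp
    then show ?case using fin by simp
  qed
qed


context setting begin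

lemma out_Lab: assumes i: "i < n" shows "outc (Suc i) = Lab n (\<sigma> ! i)"
proof -
  have v: "vt (Suc i) = \<sigma> ! i" unfolding vt_def by simp
  have t: "1 \<le> Suc i" "Suc i \<le> n" using i by auto
  have p: "\<sigma> ! i \<in> pres (Suc i)" using vt_pres[OF t] v by simp
  have "Lab n (\<sigma> ! i) = Lab (Suc i) (\<sigma> ! i)" by (rule Lab_stable[OF p t(2) order_refl])
  then show ?thesis unfolding outc_def v by simp
qed

lemma pres_n: "pres n = V" unfolding pres_def using setV by simp

lemma sig_in: "i < n \<Longrightarrow> \<sigma> ! i \<in> pres n" unfolding pres_def by simp

lemma out_range: assumes "i < n" shows "outc (Suc i) \<in> {1..k+1}"
proof -
  have "Lab n (\<sigma> ! i) \<in> {1..k+1}" by (rule Lab_range[OF order_refl sig_in[OF assms]])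
  then show ?thesis using out_Lab[OF assms] by simp
qed

lemma out_proper: assumes "i < n" "j < n" "(\<sigma> ! i, \<sigma> ! j) \<in> E" shows "outc (Suc i) \<noteq> outc (Suc j)"
proof -
  have "Lab n (\<sigma> ! i) \<noteq> Lab n (\<sigma> ! j)" by (rule Lab_proper[OF order_refl sig_in[OF assms(1)] sig_in[OF assms(2)] assms(3)])
  then show ?thesis using out_Lab assms by simp
qed

end

context inv begin

lemma outc_explicit: "1 \<le> t \<Longrightarrow> t \<le> m \<Longrightarrow>
  alg.outc k l R (induced_edges E (nball E (set (take m \<sigma>)) (R + l))) (take m \<sigma>) t = outc t"
  using outc_eq[of t] unfolding F_def W_def \<sigma>'_def pres_def .

end

definition Alg :: "nat \<Rightarrow> nat \<Rightarrow> online_alg" where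
  "Alg k l = (\<lambda>n pre W F. alg.outc k l ((3 * k + 1) * (2 + flog n)) F pre (length pre))"

definition Tf :: "nat \<Rightarrow> nat \<Rightarrow> nat \<Rightarrow> nat" where
  "Tf k l = (\<lambda>n. (3 * k + 1) * (2 + flog n) + l)"

theorem theorem4:
  fixes k l :: nat
  assumes "k \<ge> 2"
  shows "\<forall>c::nat. c \<ge> 1 \<longrightarrow>
    (\<exists>(A::online_alg) (T::nat \<Rightarrow> nat).
       (\<lambda>n. real (T n)) \<in> O(\<lambda>n. ln (real n)) \<and>
       (\<forall>V E \<sigma>. graph V E \<and> connected_graph V E \<and> in_L k l V E \<and>
          V \<subseteq> {1..c * card V ^ c} \<and> distinct \<sigma> \<and> set \<sigma> = V \<longrightarrow>
          (\<forall>i < card V. online_output A (card V) (T (card V)) E \<sigma> i \<in> {1..k+1}) \<and>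
          (\<forall>i < card V. \<forall>j < card V. (\<sigma> ! i, \<sigma> ! j) \<in> E \<longrightarrow>
             online_output A (card V) (T (card V)) E \<sigma> i \<noteq>
             online_output A (card V) (T (card V)) E \<sigma> j)))"
proof (intro allI impI)
  fix c :: nat
  show "\<exists>(A::online_alg) (T::nat \<Rightarrow> nat).
       (\<lambda>n. real (T n)) \<in> O(\<lambda>n. ln (real n)) \<and>
       (\<forall>V E \<sigma>. graph V E \<and> connected_graph V E \<and> in_L k l V E \<and>
          V \<subseteq> {1..c * card V ^ c} \<and> distinct \<sigma> \<and> set \<sigma> = V \<longrightarrow>
          (\<forall>i < card V. online_output A (card V) (T (card V)) E \<sigma> i \<in> {1..k+1}) \<and>
          (\<forall>i < card V. \<forall>j < card V. (\<sigma> ! i, \<sigma> ! j) \<in> E \<longrightarrow>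
             online_output A (card V) (T (card V)) E \<sigma> i \<noteq>
             online_output A (card V) (T (card V)) E \<sigma> j))"
  proof (rule exI[of _ "Alg k l"], rule exI[of _ "Tf k l"], rule conjI)
  show "(\<lambda>n. real (Tf k l n)) \<in> O(\<lambda>n. ln (real n))" unfolding Tf_def by (rule T_bigo)
  show "\<forall>V E \<sigma>. graph V E \<and> connected_graph V E \<and> in_L k l V E \<and>
          V \<subseteq> {1..c * card V ^ c} \<and> distinct \<sigma> \<and> set \<sigma> = V \<longrightarrow>
          (\<forall>i < card V. online_output (Alg k l) (card V) (Tf k l (card V)) E \<sigma> i \<in> {1..k+1}) \<and>
          (\<forall>i < card V. \<forall>j < card V. (\<sigma> ! i, \<sigma> ! j) \<in> E \<longrightarrow>
             online_output (Alg k l) (card V) (Tf k l (card V)) E \<sigma> i \<noteq>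
             online_output (Alg k l) (card V) (Tf k l (card V)) E \<sigma> j)"
  proof (intro allI impI)
    fix V E \<sigma>
    assume h: "graph V E \<and> connected_graph V E \<and> in_L k l V E \<and>
          V \<subseteq> {1..c * card V ^ c} \<and> distinct \<sigma> \<and> set \<sigma> = V"
    define N where "N = card V"
    define R where "R = (3 * k + 1) * (2 + flog N)"
    have len: "length \<sigma> = N" unfolding N_def using h distinct_card by fastforce
    interpret S: setting k l R E \<sigma> V
      by unfold_locales (use h assms in \<open>auto simp: R_def N_def\<close>)
    have key: "\<And>i. i < N \<Longrightarrow> online_output (Alg k l) N (Tf k l N) E \<sigma> i = S.outc (Suc i)"
    proof -
      fix i assume i: "i < N"
      interpret I: inv k l R E \<sigma> "Suc i"
        by unfold_locales (use i len in \<open>auto simp: R_def\<close>)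
      have "online_output (Alg k l) N (Tf k l N) E \<sigma> i =
            alg.outc k l R (induced_edges E (nball E (set (take (Suc i) \<sigma>)) (R + l))) (take (Suc i) \<sigma>) (Suc i)"
        unfolding online_output_def Alg_def Tf_def Let_def R_def using i len by simp
      also have "\<dots> = S.outc (Suc i)" using I.outc_explicit[of "Suc i"] by simp
      finally show "online_output (Alg k l) N (Tf k l N) E \<sigma> i = S.outc (Suc i)" .
    qed
    show "(\<forall>i < card V. online_output (Alg k l) (card V) (Tf k l (card V)) E \<sigma> i \<in> {1..k+1}) \<and>
          (\<forall>i < card V. \<forall>j < card V. (\<sigma> ! i, \<sigma> ! j) \<in> E \<longrightarrow>
             online_output (Alg k l) (card V) (Tf k l (card V)) E \<sigma> i \<noteq>
             online_output (Alg k l) (card V) (Tf k l (card V)) E \<sigma> j)"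
      unfolding N_def[symmetric] using key S.out_range S.out_proper len by simp
  qed
  qed
qed


end
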